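(* Assume $\rho<1$ and that the limits $f_j(z)=\lim_{n\to\infty}\mathbb E[z^{X_n}1_{\{J_{n+1}=j\}}]$, $|z|\le1$, exist (so $f_j(0)=\lim_n\mathbb P(X_n=0,J_{n+1}=j)$ and $f_j(1)=\pi_j$). Then for $|z|\le 1$ and $j=1,\dots,N$, $$(z-A_{jj}(z))f_j(z)-\sum_{i\neq j}A_{ij}(z)f_i(z)=(B(z)-1)\sum_{i=1}^N A_{ij}(z)f_i(0),$$ i.e. $M(z)^T f(z)=(B(z)-1)A(z)^Tf(0)$ with $f(z)=(f_1(z),\dots,f_N(z))^T$. Moreover, if $\mathbb E[B]<\infty$, then $$\sum_{i=1}^N f_i(0)=\frac{1-\rho}{\mathbb E[B]}.$$
   Context: Let $N\ge 2$. For $i,j\in\{1,\dots,N\}$ let $A_{ij}(z)=\sum_{k\ge 0}a_{ij}(k)z^k$ with $a_{ij}(k)\ge0$, $P_{ij}=A_{ij}(1)$, $\alpha_{ij}=A'_{ij}(1)<\infty$; $P=(P_{ij})$ is stochastic and irreducible with stationary distribution $\pi$, and $\rho=\sum_{i,j}\pi_i\alpha_{ij}$. $A(z)=(A_{ij}(z))$ and $M(z)=zI-A(z)$. Let $(A_n,J_{n+1})_{n\ge1}$ be random variables with $A_n\in\{0,1,\dots\}$, $J_n\in\{1,\dots,N\}$, such that conditionally on $J_n=i$ and on all earlier variables and all $B_m$, $\mathbb P(A_n=k,J_{n+1}=j)=a_{ij}(k)$. Let $(B_n)$ be i.i.d. positive-integer-valued with generating function $B(z)$ and mean $\mathbb E[B]$,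 independent of everything else. Let $X_0$ be a nonnegative integer and $X_n=X_{n-1}-1+A_n$ if $X_{n-1}\ge1$, $X_n=A_n+B_n-1$ if $X_{n-1}=0$. *)

theory Defs
  imports "HOL-Probability.Probability"
begin

definition gf :: "(nat \<Rightarrow> real) \<Rightarrow> complex \<Rightarrow> complex" where
  "gf c z = (\<Sum>k. complex_of_real (c k) * z ^ k)"

fun Xproc :: "nat \<Rightarrow> (nat \<Rightarrow> 'a \<Rightarrow> nat) \<Rightarrow> (nat \<Rightarrow> 'a \<Rightarrow> nat) \<Rightarrow> nat \<Rightarrow> 'a \<Rightarrow> nat" where
  "Xproc X0 A B 0 \<omega> = X0"
| "Xproc X0 A B (Suc n) \<omega> =
     (if Xproc X0 A B n \<omega> \<ge> 1 then Xproc X0 A B n \<omega> - 1 + A (Suc n) \<omega>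
      else A (Suc n) \<omega> + B (Suc n) \<omega> - 1)"

definition stochastic_mat :: "nat \<Rightarrow> (nat \<Rightarrow> nat \<Rightarrow> real) \<Rightarrow> bool" where
  "stochastic_mat N P \<longleftrightarrow> (\<forall>i\<in>{1..N}. (\<forall>j\<in>{1..N}. P i j \<ge> 0) \<and> (\<Sum>j\<in>{1..N}. P i j) = 1)"

definition irreducible_mat :: "nat \<Rightarrow> (nat \<Rightarrow> nat \<Rightarrow> real) \<Rightarrow> bool" where
  "irreducible_mat N P \<longleftrightarrow>
     (\<forall>i\<in>{1..N}. \<forall>j\<in>{1..N}. (i, j) \<in> {(k, l). k \<in> {1..N} \<and> l \<in> {1..N} \<and> P k l > 0}\<^sup>+)"

definition stationary_dist :: "nat \<Rightarrow> (nat \<Rightarrow> nat \<Rightarrow> real) \<Rightarrow> (nat \<Rightarrow> real) \<Rightarrow> bool" where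
  "stationary_dist N P \<pi> \<longleftrightarrow> (\<forall>i\<in>{1..N}. \<pi> i \<ge> 0) \<and> (\<Sum>i\<in>{1..N}. \<pi> i) = 1 \<and>
     (\<forall>j\<in>{1..N}. (\<Sum>i\<in>{1..N}. \<pi> i * P i j) = \<pi> j)"

end

theory Submission
  imports Defs
begin

no_notation Infinite_Sum.abs_summable_on (infixr "abs'_summable'_on" 46)


definition ext :: "nat \<times> (nat\<times>nat\<times>nat) list \<Rightarrow> nat\<times>nat\<times>nat \<Rightarrow> nat \<times> (nat\<times>nat\<times>nat) list" where
  "ext h z = (fst h, snd h @ [z])"
definition lastJ :: "nat \<times> (nat\<times>nat\<times>nat) list \<Rightarrow> nat" where
  "lastJ h = (if snd h = [] then fst h else fst (last (snd h)))"
definition stepf :: "nat \<Rightarrow> nat\<times>nat\<times>nat \<Rightarrow> nat" where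
  "stepf x z = (if x \<ge> 1 then x - 1 + fst (snd z) else fst (snd z) + snd (snd z) - 1)"
definition jjf :: "nat \<times> (nat\<times>nat\<times>nat) list \<Rightarrow> nat \<Rightarrow> nat" where
  "jjf h t = (if t = 1 then fst h else fst (snd h ! (t - 2)))"
definition kkf :: "nat \<times> (nat\<times>nat\<times>nat) list \<Rightarrow> nat \<Rightarrow> nat" where
  "kkf h t = fst (snd (snd h ! (t - 1)))"
definition bbf :: "nat \<times> (nat\<times>nat\<times>nat) list \<Rightarrow> nat \<Rightarrow> nat" where
  "bbf h t = snd (snd (snd h ! (t - 1)))"

lemma lastJ_ext[simp]: "lastJ (ext h z) = fst z"
  by (simp add: lastJ_def ext_def)
lemma ext_inj: "inj (\<lambda>(h, z). ext h z)"
  by (auto simp: inj_def ext_def prod_eq_iff)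

locale qsys =
  fixes M :: "'s measure"
    and N :: nat
    and a :: "nat \<Rightarrow> nat \<Rightarrow> nat \<Rightarrow> real"
    and pB :: "nat \<Rightarrow> real"
    and \<pi> :: "nat \<Rightarrow> real"
    and A J B :: "nat \<Rightarrow> 's \<Rightarrow> nat"
    and X0 :: nat
    and f :: "nat \<Rightarrow> complex \<Rightarrow> complex"
  assumes a_nonneg: "\<And>i j k. a i j k \<ge> 0"
    and a_summ: "\<And>i j. i \<in> {1..N} \<Longrightarrow> j \<in> {1..N} \<Longrightarrow> summable (a i j)"
    and alpha_fin: "\<And>i j. i \<in> {1..N} \<Longrightarrow> j \<in> {1..N} \<Longrightarrow> summable (\<lambda>k. real k * a i j k)"
    and P_stoch: "stochastic_mat N (\<lambda>i j. \<Sum>k. a i j k)"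
    and P_irred: "irreducible_mat N (\<lambda>i j. \<Sum>k. a i j k)"
    and pi_stat: "stationary_dist N (\<lambda>i j. \<Sum>k. a i j k) \<pi>"
    and pB_nonneg: "\<And>k. pB k \<ge> 0"
    and pB0: "pB 0 = 0"
    and pB_sum: "pB sums 1"
    and prob: "prob_space M"
    and A_rv: "\<And>n. A n \<in> measurable M (count_space UNIV)"
    and J_rv: "\<And>n. J n \<in> measurable M (count_space UNIV)"
    and B_rv: "\<And>n. B n \<in> measurable M (count_space UNIV)"
    and J_range: "\<And>n \<omega>. n \<ge> 1 \<Longrightarrow> \<omega> \<in> space M \<Longrightarrow> J n \<omega> \<in> {1..N}"
    and B_pos: "\<And>n \<omega>. n \<ge> 1 \<Longrightarrow> \<omega> \<in> space M \<Longrightarrow> B n \<omega> \<ge> 1"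
    and joint_law: "\<And>n m jj kk bb.
       measure M {\<omega> \<in> space M. J 1 \<omega> = jj 1 \<and>
            (\<forall>t\<in>{1..n}. A t \<omega> = kk t \<and> J (Suc t) \<omega> = jj (Suc t)) \<and>
            (\<forall>t\<in>{1..m}. B t \<omega> = bb t)}
       = measure M {\<omega> \<in> space M. J 1 \<omega> = jj 1}
         * (\<Prod>t\<in>{1..n}. a (jj t) (jj (Suc t)) (kk t)) * (\<Prod>t\<in>{1..m}. pB (bb t))"
    and rho_lt: "(\<Sum>i\<in>{1..N}. \<Sum>j\<in>{1..N}. \<pi> i * (\<Sum>k. real k * a i j k)) < 1"
    and f_lim: "\<And>j z. j \<in> {1..N} \<Longrightarrow> norm z \<le> 1 \<Longrightarrow>
       (\<lambda>n. integral\<^sup>L M (\<lambda>\<omega>. z ^ Xproc X0 A B n \<omega> * indicator {\<omega>'. J (Suc n) \<omega>' = j} \<omega>))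
         \<longlonglongrightarrow> f j z"
begin

definition H :: "nat \<Rightarrow> 's \<Rightarrow> nat \<times> (nat\<times>nat\<times>nat) list" where
  "H n \<omega> = (J 1 \<omega>, map (\<lambda>t. (J (Suc t) \<omega>, A t \<omega>, B t \<omega>)) [1..<Suc n])"
definition Z :: "nat \<Rightarrow> 's \<Rightarrow> nat\<times>nat\<times>nat" where
  "Z n \<omega> = (J (Suc (Suc n)) \<omega>, A (Suc n) \<omega>, B (Suc n) \<omega>)"
definition xl :: "(nat\<times>nat\<times>nat) list \<Rightarrow> nat" where
  "xl l = foldl stepf X0 l"
definition w :: "nat \<Rightarrow> nat \<times> (nat\<times>nat\<times>nat) list \<Rightarrow> real" where
  "w n h = measure M {\<omega>\<in>space M. H n \<omega> = h}"
definition \<kappa> :: "nat \<Rightarrow> nat\<times>nat\<times>nat \<Rightarrow> real" where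
  "\<kappa> i z = (if i \<in> {1..N} \<and> fst z \<in> {1..N} then a i (fst z) (fst (snd z)) * pB (snd (snd z)) else 0)"

lemma H_Suc: "H (Suc n) \<omega> = ext (H n \<omega>) (Z n \<omega>)"
  by (simp add: H_def Z_def ext_def)

lemma len_H: "length (snd (H n \<omega>)) = n"
  by (simp add: H_def)

lemma J_H: "J (Suc n) \<omega> = lastJ (H n \<omega>)"
proof (induction n)
  case 0 then show ?case by (simp add: H_def lastJ_def)
next
  case (Suc n) then show ?case by (simp add: H_Suc Z_def)
qed

lemma X_H: "Xproc X0 A B n \<omega> = xl (snd (H n \<omega>))"
proof (induction n)
  case 0 then show ?case by (simp add: H_def xl_def)
next
  case (Suc n) then show ?case by (simp add: H_Suc Z_def xl_def ext_def stepf_def)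
qed

lemma H_event:
  "{\<omega>\<in>space M. H n \<omega> = (j1, l)} = (if length l = n then
     {\<omega> \<in> space M. J 1 \<omega> = jjf (j1,l) 1 \<and>
            (\<forall>t\<in>{1..n}. A t \<omega> = kkf (j1,l) t \<and> J (Suc t) \<omega> = jjf (j1,l) (Suc t)) \<and>
            (\<forall>t\<in>{1..n}. B t \<omega> = bbf (j1,l) t)} else {})"
proof (cases "length l = n")
  case False
  then show ?thesis using len_H[of n] by (auto simp: H_def)
next
  case True
  have "H n \<omega> = (j1, l) \<longleftrightarrow> J 1 \<omega> = jjf (j1,l) 1 \<and>
            (\<forall>t\<in>{1..n}. A t \<omega> = kkf (j1,l) t \<and> J (Suc t) \<omega> = jjf (j1,l) (Suc t)) \<and>
            (\<forall>t\<in>{1..n}. B t \<omega> = bbf (j1,l) t)" for \<omega>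
  proof -
    have "map (\<lambda>t. (J (Suc t) \<omega>, A t \<omega>, B t \<omega>)) [1..<Suc n] = l \<longleftrightarrow>
          (\<forall>i<n. (J (Suc (Suc i)) \<omega>, A (Suc i) \<omega>, B (Suc i) \<omega>) = l ! i)"
      using True by (auto simp: list_eq_iff_nth_eq simp del: upt_Suc)
    also have "\<dots> \<longleftrightarrow> (\<forall>t\<in>{1..n}. A t \<omega> = kkf (j1,l) t \<and> J (Suc t) \<omega> = jjf (j1,l) (Suc t)) \<and>
            (\<forall>t\<in>{1..n}. B t \<omega> = bbf (j1,l) t)"
    proof safe
      fix t assume h: "\<forall>i<n. (J (Suc (Suc i)) \<omega>, A (Suc i) \<omega>, B (Suc i) \<omega>) = l ! i" and t: "t \<in> {1..n}"
      then obtain i where i: "t = Suc i" "i < n" by (cases t) auto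
      from h i show "A t \<omega> = kkf (j1, l) t" "J (Suc t) \<omega> = jjf (j1, l) (Suc t)" "B t \<omega> = bbf (j1, l) t"
        by (auto simp: kkf_def jjf_def bbf_def prod_eq_iff)
    next
      fix i assume h1: "\<forall>t\<in>{1..n}. A t \<omega> = kkf (j1, l) t \<and> J (Suc t) \<omega> = jjf (j1, l) (Suc t)"
        and h2: "\<forall>t\<in>{1..n}. B t \<omega> = bbf (j1, l) t" and i: "i < n"
      from h1[rule_format, of "Suc i"] h2[rule_format, of "Suc i"] i
      show "(J (Suc (Suc i)) \<omega>, A (Suc i) \<omega>, B (Suc i) \<omega>) = l ! i"
        by (auto simp: kkf_def jjf_def bbf_def prod_eq_iff)
    qed
    finally show ?thesis by (simp add: H_def jjf_def)
  qed
  then show ?thesis using True by auto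
qed

end

context qsys begin

lemma meas_J[measurable]: "J n \<in> measurable M (count_space UNIV)" by (rule J_rv)
lemma meas_A[measurable]: "A n \<in> measurable M (count_space UNIV)" by (rule A_rv)
lemma meas_B[measurable]: "B n \<in> measurable M (count_space UNIV)" by (rule B_rv)

lemma cyl_sets: "{\<omega> \<in> space M. J 1 \<omega> = c \<and>
            (\<forall>t\<in>{1..n}. A t \<omega> = kk t \<and> J (Suc t) \<omega> = jj t) \<and>
            (\<forall>t\<in>{1..m}. B t \<omega> = bb t)} \<in> sets M"
  by measurable

lemma H_meas[measurable]: "H n \<in> measurable M (count_space UNIV)"
proof -
  have "H n -` {h} \<inter> space M \<in> sets M" for h
  proof -
    obtain j1 l where h: "h = (j1, l)" by (cases h)
    have "H n -` {h} \<inter> space M = {\<omega>\<in>space M. H n \<omega> = (j1, l)}" using h by auto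
    also have "\<dots> \<in> sets M" unfolding H_event using cyl_sets by auto
    finally show ?thesis .
  qed
  then show ?thesis by (auto simp: measurable_count_space_eq2_countable)
qed

lemma Z_meas[measurable]: "Z n \<in> measurable M (count_space UNIV)"
  unfolding Z_def by measurable

lemma w_formula:
  assumes "length l = n"
  shows "w n (j1, l) = measure M {\<omega> \<in> space M. J 1 \<omega> = j1}
     * (\<Prod>t\<in>{1..n}. a (jjf (j1,l) t) (jjf (j1,l) (Suc t)) (kkf (j1,l) t)) * (\<Prod>t\<in>{1..n}. pB (bbf (j1,l) t))"
  unfolding w_def H_event if_P[OF assms] by (rule joint_law[THEN trans]) (simp add: jjf_def)

lemma w_nonneg: "w n h \<ge> 0" by (simp add: w_def)

lemma KEY: "w (Suc n) (ext h z) = w n h * \<kappa> (lastJ h) z"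
proof -
  obtain j1 l where h: "h = (j1, l)" by (cases h)
  obtain j k b where z: "z = (j, k, b)" by (cases z)
  show ?thesis
  proof (cases "length l = n")
    case False
    then have "w n h = 0" "w (Suc n) (ext h z) = 0"
      unfolding w_def h ext_def by (simp_all add: H_event)
    then show ?thesis by simp
  next
    case len: True
    show ?thesis
    proof (cases "lastJ h \<in> {1..N} \<and> j \<in> {1..N}")
      case False
      have E: "{\<omega>\<in>space M. H (Suc n) \<omega> = ext h z} = {}"
      proof (safe)
        fix \<omega> assume \<omega>: "\<omega> \<in> space M" "H (Suc n) \<omega> = ext h z"
        then have "ext (H n \<omega>) (Z n \<omega>) = ext h z" by (simp add: H_Suc)
        then have "H n \<omega> = h" "Z n \<omega> = z" by (auto simp: ext_def prod_eq_iff)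
        then have "J (Suc n) \<omega> = lastJ h" "J (Suc (Suc n)) \<omega> = j"
          by (auto simp: J_H Z_def z)
        with J_range[of "Suc n" \<omega>] J_range[of "Suc (Suc n)" \<omega>] \<omega>(1) False
        show "\<omega> \<in> {}" by auto
      qed
      have "w (Suc n) (ext h z) = 0" unfolding w_def E by simp
      moreover have "\<kappa> (lastJ h) z = 0" using False unfolding \<kappa>_def z by auto
      ultimately show ?thesis by simp
    next
      case True
      define h' where "h' = (j1, l @ [z])"
      have e: "ext h z = h'" by (simp add: ext_def h h'_def)
      have lh': "length (l @ [z]) = Suc n" using len by simp
      have jj: "jjf h' t = jjf h t" if "1 \<le> t" "t \<le> Suc n" for t
        using that len by (auto simp: jjf_def h'_def h nth_append)
      have jjl: "jjf h' (Suc (Suc n)) = j" using len by (auto simp: jjf_def h'_def z nth_append)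
      have jjn: "jjf h (Suc n) = lastJ h"
        using len by (cases n) (auto simp: jjf_def lastJ_def h last_conv_nth)
      have kk: "kkf h' t = kkf h t" "bbf h' t = bbf h t" if "1 \<le> t" "t \<le> n" for t
        using that len by (auto simp: kkf_def bbf_def h'_def h nth_append)
      have kkl: "kkf h' (Suc n) = k" "bbf h' (Suc n) = b"
        using len by (auto simp: kkf_def bbf_def h'_def z nth_append)
      have "w (Suc n) (ext h z) = measure M {\<omega> \<in> space M. J 1 \<omega> = j1}
         * (\<Prod>t\<in>{1..Suc n}. a (jjf h' t) (jjf h' (Suc t)) (kkf h' t)) * (\<Prod>t\<in>{1..Suc n}. pB (bbf h' t))"
        unfolding e h'_def by (rule w_formula) (use len in simp)
      also have "(\<Prod>t\<in>{1..Suc n}. a (jjf h' t) (jjf h' (Suc t)) (kkf h' t))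
          = a (lastJ h) j k * (\<Prod>t\<in>{1..n}. a (jjf h t) (jjf h (Suc t)) (kkf h t))"
        by (subst prod.nat_ivl_Suc') (auto simp: jj jjl jjn kkl kk intro!: prod.cong)
      also have "(\<Prod>t\<in>{1..Suc n}. pB (bbf h' t)) = pB b * (\<Prod>t\<in>{1..n}. pB (bbf h t))"
        by (subst prod.nat_ivl_Suc') (auto simp: kkl kk intro!: prod.cong)
      also have "w n h = measure M {\<omega> \<in> space M. J 1 \<omega> = j1}
         * (\<Prod>t\<in>{1..n}. a (jjf h t) (jjf h (Suc t)) (kkf h t)) * (\<Prod>t\<in>{1..n}. pB (bbf h t))"
        unfolding h by (rule w_formula[OF len])
      ultimately show ?thesis using True by (simp add: \<kappa>_def z)
    qed
  qed
qed

end

lemma disc_nn: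
  fixes W :: "'a \<Rightarrow> 'c::countable"
  assumes W: "W \<in> measurable M (count_space UNIV)"
  shows "(\<integral>\<^sup>+\<omega>. G (W \<omega>) \<partial>M) = (\<integral>\<^sup>+c. emeasure M {\<omega>\<in>space M. W \<omega> = c} * G c \<partial>count_space UNIV)"
proof -
  have m: "{\<omega>\<in>space M. W \<omega> = c} \<in> sets M" for c
    using W by (auto simp: measurable_count_space_eq2_countable vimage_def Int_def conj_commute)
  have "(\<integral>\<^sup>+\<omega>. G (W \<omega>) \<partial>M) = (\<integral>\<^sup>+\<omega>. \<integral>\<^sup>+c. G c * indicator {\<omega>'\<in>space M. W \<omega>' = c} \<omega> \<partial>count_space UNIV \<partial>M)"
  proof (intro nn_integral_cong)
    fix \<omega> assume "\<omega> \<in> space M"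
    then have "(\<lambda>c. G c * indicator {\<omega>'\<in>space M. W \<omega>' = c} \<omega>) = (\<lambda>c. G (W \<omega>) * indicator {W \<omega>} c)"
      by (auto simp: indicator_def fun_eq_iff)
    then show "G (W \<omega>) = (\<integral>\<^sup>+c. G c * indicator {\<omega>'\<in>space M. W \<omega>' = c} \<omega> \<partial>count_space UNIV)"
      by (simp add: nn_integral_cmult_indicator)
  qed
  also have "\<dots> = (\<integral>\<^sup>+c. \<integral>\<^sup>+\<omega>. G c * indicator {\<omega>'\<in>space M. W \<omega>' = c} \<omega> \<partial>M \<partial>count_space UNIV)"
    using m by (intro nn_integral_count_space_nn_integral) (auto intro!: borel_measurable_indicator borel_measurable_times)
  also have "\<dots> = (\<integral>\<^sup>+c. emeasure M {\<omega>\<in>space M. W \<omega> = c} * G c \<partial>count_space UNIV)"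
    by (intro nn_integral_cong) (simp add: nn_integral_cmult_indicator m mult.commute)
  finally show ?thesis .
qed
lemma disc_int:
  fixes W :: "'a \<Rightarrow> 'c::countable" and F :: "'c \<Rightarrow> 'b::{banach,second_countable_topology}"
  assumes P: "prob_space M" and W: "W \<in> measurable M (count_space UNIV)"
    and S: "(\<lambda>c. measure M {\<omega>\<in>space M. W \<omega> = c} *\<^sub>R F c) abs_summable_on UNIV"
  shows "integrable M (\<lambda>\<omega>. F (W \<omega>))"
    and "integral\<^sup>L M (\<lambda>\<omega>. F (W \<omega>)) = infsetsum (\<lambda>c. measure M {\<omega>\<in>space M. W \<omega> = c} *\<^sub>R F c) UNIV"
proof -
  interpret prob_space M by (rule P)
  define p where "p c = measure M {\<omega>\<in>space M. W \<omega> = c}" for c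
  have m: "{\<omega>\<in>space M. W \<omega> = c} \<in> sets M" for c
    using W by (auto simp: measurable_count_space_eq2_countable vimage_def Int_def conj_commute)
  have D: "distr M (count_space UNIV) W = density (count_space UNIV) p"
  proof (rule measure_eqI_countable'[where A=UNIV])
    fix a :: 'c
    have "emeasure (distr M (count_space UNIV) W) {a} = emeasure M (W -` {a} \<inter> space M)"
      using W by (simp add: emeasure_distr)
    also have "W -` {a} \<inter> space M = {\<omega>\<in>space M. W \<omega> = a}" by auto
    also have "emeasure M \<dots> = ennreal (p a)" by (simp add: p_def emeasure_eq_measure)
    also have "\<dots> = emeasure (density (count_space UNIV) p) {a}"
      by (simp add: emeasure_density nn_integral_count_space_indicator)
    finally show "emeasure (distr M (count_space UNIV) W) {a} = emeasure (density (count_space UNIV) p) {a}" .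
  qed auto
  have pnn: "AE x in count_space UNIV. 0 \<le> p x" by (simp add: p_def)
  have "integrable (count_space UNIV) (\<lambda>c. p c *\<^sub>R F c)"
    using S by (simp add: abs_summable_on_def p_def)
  then have "integrable (density (count_space UNIV) p) F"
    using pnn by (subst integrable_density) auto
  then have "integrable (distr M (count_space UNIV) W) F" by (simp add: D)
  then show "integrable M (\<lambda>\<omega>. F (W \<omega>))"
    using W by (subst (asm) integrable_distr_eq) auto
  have "integral\<^sup>L M (\<lambda>\<omega>. F (W \<omega>)) = integral\<^sup>L (distr M (count_space UNIV) W) F"
    using W by (subst integral_distr) auto
  also have "\<dots> = integral\<^sup>L (count_space UNIV) (\<lambda>c. p c *\<^sub>R F c)"
    unfolding D using pnn by (subst integral_density) auto
  finally show "integral\<^sup>L M (\<lambda>\<omega>. F (W \<omega>)) = infsetsum (\<lambda>c. measure M {\<omega>\<in>space M. W \<omega> = c} *\<^sub>R F c) UNIV"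
    by (simp add: infsetsum_def p_def)
qed

context qsys begin

lemma w_abs: "w n abs_summable_on UNIV"
proof -
  interpret prob_space M by (rule prob)
  have "(\<integral>\<^sup>+\<omega>. 1 \<partial>M) = (\<integral>\<^sup>+c. emeasure M {\<omega>\<in>space M. H n \<omega> = c} * 1 \<partial>count_space UNIV)"
    by (rule disc_nn) simp
  moreover have "(\<integral>\<^sup>+\<omega>. 1 \<partial>M) = 1" by (simp add: emeasure_space_1)
  ultimately have "(\<integral>\<^sup>+c. ennreal (w n c) \<partial>count_space UNIV) = 1"
    by (simp add: w_def emeasure_eq_measure)
  then show ?thesis unfolding abs_summable_on_def
    by (intro integrableI_nonneg) (auto simp: w_nonneg)
qed

lemma ext_surj: "snd h' \<noteq> [] \<Longrightarrow> h' = ext (fst h', butlast (snd h')) (last (snd h'))"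
  by (simp add: ext_def)

lemma w_Suc_out: "h' \<notin> range (\<lambda>(h,z). ext h z) \<Longrightarrow> w (Suc n) h' = 0"
proof -
  assume h': "h' \<notin> range (\<lambda>(h,z). ext h z)"
  then have "snd h' = []" using ext_surj[of h'] by (metis (mono_tags, lifting) case_prod_conv rangeI)
  have "H (Suc n) \<omega> \<noteq> h'" for \<omega> using len_H[of "Suc n" \<omega>] \<open>snd h' = []\<close> by auto
  then have E: "{\<omega>\<in>space M. H (Suc n) \<omega> = h'} = {}" by auto
  show ?thesis unfolding w_def E by simp
qed

lemma tower:
  fixes G :: "nat \<times> (nat\<times>nat\<times>nat) list \<Rightarrow> nat\<times>nat\<times>nat \<Rightarrow> 'b::{banach,second_countable_topology}"
  assumes bnd: "\<And>h z. norm (G h z) \<le> C"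
  shows "integral\<^sup>L M (\<lambda>\<omega>. G (H n \<omega>) (Z n \<omega>)) =
         integral\<^sup>L M (\<lambda>\<omega>. infsetsum (\<lambda>z. \<kappa> (lastJ (H n \<omega>)) z *\<^sub>R G (H n \<omega>) z) UNIV)"
proof -
  define G' where "G' h' = G (fst h', butlast (snd h')) (last (snd h'))" for h'
  have G'e: "G' (ext h z) = G h z" for h z by (simp add: G'_def ext_def)
  define R where "R h = infsetsum (\<lambda>z. \<kappa> (lastJ h) z *\<^sub>R G h z) UNIV" for h
  have C0: "C \<ge> 0" using bnd[of undefined undefined] norm_ge_zero order_trans by blast
  have S1: "(\<lambda>h'. w (Suc n) h' *\<^sub>R G' h') abs_summable_on UNIV"
  proof (rule abs_summable_on_comparison_test')
    show "(\<lambda>h'. C * w (Suc n) h') abs_summable_on UNIV" using w_abs by auto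
    show "norm (w (Suc n) h' *\<^sub>R G' h') \<le> C * w (Suc n) h'" for h'
      using bnd[of "(fst h', butlast (snd h'))" "last (snd h')"] w_nonneg[of "Suc n" h']
      by (simp add: G'_def) (metis mult.commute mult_left_mono)
  qed
  have "integral\<^sup>L M (\<lambda>\<omega>. G (H n \<omega>) (Z n \<omega>)) = integral\<^sup>L M (\<lambda>\<omega>. G' (H (Suc n) \<omega>))"
    by (simp add: H_Suc G'e)
  also have "\<dots> = infsetsum (\<lambda>h'. w (Suc n) h' *\<^sub>R G' h') UNIV"
    unfolding w_def by (rule disc_int(2)[OF prob H_meas]) (use S1 in \<open>simp add: w_def\<close>)
  also have "\<dots> = infsetsum (\<lambda>h'. w (Suc n) h' *\<^sub>R G' h') (range (\<lambda>(h,z). ext h z))"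
    by (rule infsetsum_cong_neutral) (auto simp: w_Suc_out)
  also have "\<dots> = infsetsum (\<lambda>(h,z). w (Suc n) (ext h z) *\<^sub>R G h z) UNIV"
    by (subst infsetsum_reindex[OF ext_inj]) (simp add: G'e case_prod_unfold)
  also have "\<dots> = infsetsum (\<lambda>(h,z). w n h *\<^sub>R (\<kappa> (lastJ h) z *\<^sub>R G h z)) UNIV"
    by (simp add: KEY case_prod_unfold)
  also have S2: "(\<lambda>(h,z). w n h *\<^sub>R (\<kappa> (lastJ h) z *\<^sub>R G h z)) abs_summable_on UNIV"
  proof -
    have "(\<lambda>x. w (Suc n) ((\<lambda>(h,z). ext h z) x) *\<^sub>R G' ((\<lambda>(h,z). ext h z) x)) abs_summable_on UNIV"
      using S1 abs_summable_on_subset by (subst abs_summable_on_reindex_iff[OF ext_inj]) blast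
    then show ?thesis by (simp add: KEY G'e case_prod_unfold)
  qed
  have "infsetsum (\<lambda>(h,z). w n h *\<^sub>R (\<kappa> (lastJ h) z *\<^sub>R G h z)) UNIV
     = infsetsum (\<lambda>h. infsetsum (\<lambda>z. w n h *\<^sub>R (\<kappa> (lastJ h) z *\<^sub>R G h z)) UNIV) UNIV"
    using infsetsum_Times[of UNIV UNIV "\<lambda>(h,z). w n h *\<^sub>R (\<kappa> (lastJ h) z *\<^sub>R G h z)"] S2
    by (simp add: case_prod_unfold)
  also have "\<dots> = infsetsum (\<lambda>h. w n h *\<^sub>R R h) UNIV"
    by (simp add: R_def infsetsum_scaleR_right[symmetric])
  also have "\<dots> = integral\<^sup>L M (\<lambda>\<omega>. R (H n \<omega>))"
  proof -
    have "(\<lambda>h. infsetsum (\<lambda>z. w n h *\<^sub>R (\<kappa> (lastJ h) z *\<^sub>R G h z)) UNIV) abs_summable_on UNIV"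
      using abs_summable_on_Sigma_project1'[of "\<lambda>h z. w n h *\<^sub>R (\<kappa> (lastJ h) z *\<^sub>R G h z)" UNIV "\<lambda>_. UNIV"] S2
      by simp
    then have "(\<lambda>h. w n h *\<^sub>R R h) abs_summable_on UNIV"
      by (simp add: R_def infsetsum_scaleR_right[symmetric])
    then show ?thesis unfolding w_def
      by (intro disc_int(2)[OF prob H_meas, symmetric]) (simp add: w_def)
  qed
  finally show ?thesis by (simp add: R_def)
qed

end

lemma nnfst:
  fixes f :: "'a::countable \<times> 'b::countable \<Rightarrow> ennreal"
  shows "(\<integral>\<^sup>+x. \<integral>\<^sup>+y. f (x,y) \<partial>count_space UNIV \<partial>count_space UNIV) = (\<integral>\<^sup>+p. f p \<partial>count_space UNIV)"
proof -
  have e: "count_space (UNIV::'a set) \<Otimes>\<^sub>M count_space (UNIV::'b set) = count_space UNIV"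
    by (subst pair_measure_countable) auto
  show ?thesis
    using sigma_finite_measure.nn_integral_fst[OF sigma_finite_measure_count_space, of f "count_space UNIV"]
    by (simp add: e)
qed

context qsys begin

lemma tower_nn:
  fixes G :: "nat \<times> (nat\<times>nat\<times>nat) list \<Rightarrow> nat\<times>nat\<times>nat \<Rightarrow> ennreal"
  shows "(\<integral>\<^sup>+\<omega>. G (H n \<omega>) (Z n \<omega>) \<partial>M) =
         (\<integral>\<^sup>+\<omega>. (\<integral>\<^sup>+z. ennreal (\<kappa> (lastJ (H n \<omega>)) z) * G (H n \<omega>) z \<partial>count_space UNIV) \<partial>M)"
proof -
  interpret prob_space M by (rule prob)
  define G' where "G' h' = G (fst h', butlast (snd h')) (last (snd h'))" for h'
  have G'e: "G' (ext h z) = G h z" for h z by (simp add: G'_def ext_def)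
  define R where "R h = (\<integral>\<^sup>+z. ennreal (\<kappa> (lastJ h) z) * G h z \<partial>count_space UNIV)" for h
  have kn: "\<kappa> i z \<ge> 0" for i z by (simp add: \<kappa>_def a_nonneg pB_nonneg)
  have "(\<integral>\<^sup>+\<omega>. G (H n \<omega>) (Z n \<omega>) \<partial>M) = (\<integral>\<^sup>+\<omega>. G' (H (Suc n) \<omega>) \<partial>M)"
    by (simp add: H_Suc G'e)
  also have "\<dots> = (\<integral>\<^sup>+h'. ennreal (w (Suc n) h') * G' h' \<partial>count_space UNIV)"
    by (subst disc_nn[OF H_meas]) (simp add: w_def emeasure_eq_measure)
  also have "\<dots> = (\<integral>\<^sup>+h'. ennreal (w (Suc n) h') * G' h' \<partial>count_space (range (\<lambda>(h,z). ext h z)))"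
    by (rule nn_integral_count_space_eq) (auto simp: w_Suc_out)
  also have "\<dots> = (\<integral>\<^sup>+p. ennreal (w (Suc n) (case p of (h,z) \<Rightarrow> ext h z)) * G' (case p of (h,z) \<Rightarrow> ext h z) \<partial>count_space UNIV)"
    by (rule nn_integral_bij_count_space[symmetric]) (use ext_inj in \<open>simp add: bij_betw_def\<close>)
  also have "\<dots> = (\<integral>\<^sup>+p. ennreal (w n (fst p)) * (ennreal (\<kappa> (lastJ (fst p)) (snd p)) * G (fst p) (snd p)) \<partial>count_space UNIV)"
    by (intro nn_integral_cong) (auto simp: KEY G'e ennreal_mult w_nonneg kn mult.assoc split: prod.splits)
  also have "\<dots> = (\<integral>\<^sup>+h. \<integral>\<^sup>+z. ennreal (w n h) * (ennreal (\<kappa> (lastJ h) z) * G h z) \<partial>count_space UNIV \<partial>count_space UNIV)"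
    by (rule nnfst[symmetric, where f="\<lambda>p. ennreal (w n (fst p)) * (ennreal (\<kappa> (lastJ (fst p)) (snd p)) * G (fst p) (snd p))", simplified])
  also have "\<dots> = (\<integral>\<^sup>+h. ennreal (w n h) * R h \<partial>count_space UNIV)"
    by (simp add: R_def nn_integral_cmult)
  also have "\<dots> = (\<integral>\<^sup>+\<omega>. R (H n \<omega>) \<partial>M)"
    by (subst disc_nn[OF H_meas]) (simp add: w_def emeasure_eq_measure)
  finally show ?thesis by (simp add: R_def)
qed

end

context qsys begin

lemma kappa_nonneg: "\<kappa> i z \<ge> 0" by (simp add: \<kappa>_def a_nonneg pB_nonneg)

lemma ks_nn:
  assumes i: "i \<in> {1..N}"
  shows "(\<integral>\<^sup>+z. ennreal (\<kappa> i z) * (\<psi> (fst z) * \<phi> (fst (snd z)) * cc (snd (snd z))) \<partial>count_space UNIV)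
     = (\<Sum>j\<in>{1..N}. \<psi> j * (\<integral>\<^sup>+k. ennreal (a i j k) * \<phi> k \<partial>count_space UNIV) * (\<integral>\<^sup>+b. ennreal (pB b) * cc b \<partial>count_space UNIV))"
proof -
  define g where "g j = (if j \<in> {1..N} then \<psi> j * (\<integral>\<^sup>+k. ennreal (a i j k) * \<phi> k \<partial>count_space UNIV) * (\<integral>\<^sup>+b. ennreal (pB b) * cc b \<partial>count_space UNIV) else 0)" for j
  have "(\<integral>\<^sup>+z. ennreal (\<kappa> i z) * (\<psi> (fst z) * \<phi> (fst (snd z)) * cc (snd (snd z))) \<partial>count_space UNIV)
    = (\<integral>\<^sup>+j. \<integral>\<^sup>+kb. ennreal (\<kappa> i (j,kb)) * (\<psi> j * \<phi> (fst kb) * cc (snd kb)) \<partial>count_space UNIV \<partial>count_space UNIV)"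
    by (rule nnfst[symmetric, where f="\<lambda>z. ennreal (\<kappa> i z) * (\<psi> (fst z) * \<phi> (fst (snd z)) * cc (snd (snd z)))", simplified])
  also have "\<dots> = (\<integral>\<^sup>+j. g j \<partial>count_space UNIV)"
  proof (intro nn_integral_cong)
    fix j :: nat
    have "(\<integral>\<^sup>+kb. ennreal (\<kappa> i (j,kb)) * (\<psi> j * \<phi> (fst kb) * cc (snd kb)) \<partial>count_space UNIV)
       = (\<integral>\<^sup>+k. \<integral>\<^sup>+b. ennreal (\<kappa> i (j,k,b)) * (\<psi> j * \<phi> k * cc b) \<partial>count_space UNIV \<partial>count_space UNIV)"
      by (rule nnfst[symmetric, where f="\<lambda>kb. ennreal (\<kappa> i (j,kb)) * (\<psi> j * \<phi> (fst kb) * cc (snd kb))", simplified])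
    also have "\<dots> = g j"
    proof (cases "j \<in> {1..N}")
      case True
      have "(\<integral>\<^sup>+k. \<integral>\<^sup>+b. ennreal (\<kappa> i (j,k,b)) * (\<psi> j * \<phi> k * cc b) \<partial>count_space UNIV \<partial>count_space UNIV)
        = (\<integral>\<^sup>+k. (\<psi> j * (ennreal (a i j k) * \<phi> k)) * (\<integral>\<^sup>+b. ennreal (pB b) * cc b \<partial>count_space UNIV) \<partial>count_space UNIV)"
      proof (intro nn_integral_cong)
        fix k
        have "(\<integral>\<^sup>+b. ennreal (\<kappa> i (j,k,b)) * (\<psi> j * \<phi> k * cc b) \<partial>count_space UNIV)
          = (\<integral>\<^sup>+b. (\<psi> j * (ennreal (a i j k) * \<phi> k)) * (ennreal (pB b) * cc b) \<partial>count_space UNIV)"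
          using i True by (intro nn_integral_cong) (simp add: \<kappa>_def ennreal_mult a_nonneg pB_nonneg ac_simps)
        also have "\<dots> = (\<psi> j * (ennreal (a i j k) * \<phi> k)) * (\<integral>\<^sup>+b. ennreal (pB b) * cc b \<partial>count_space UNIV)"
          by (rule nn_integral_cmult) simp
        finally show "(\<integral>\<^sup>+b. ennreal (\<kappa> i (j,k,b)) * (\<psi> j * \<phi> k * cc b) \<partial>count_space UNIV)
          = (\<psi> j * (ennreal (a i j k) * \<phi> k)) * (\<integral>\<^sup>+b. ennreal (pB b) * cc b \<partial>count_space UNIV)" .
      qed
      also have "\<dots> = g j"
        using True nn_integral_cmult[of "\<lambda>k. ennreal (a i j k) * \<phi> k" "count_space UNIV" "\<psi> j"]
        by (subst nn_integral_multc) (simp_all add: g_def)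
      finally show ?thesis .
    next
      case False
      then have "\<kappa> i (j,k,b) = 0" for k b unfolding \<kappa>_def by auto
      then show ?thesis using False unfolding g_def by auto
    qed
    finally show "(\<integral>\<^sup>+kb. ennreal (\<kappa> i (j,kb)) * (\<psi> j * \<phi> (fst kb) * cc (snd kb)) \<partial>count_space UNIV) = g j" .
  qed
  also have "\<dots> = (\<integral>\<^sup>+j. g j \<partial>count_space {1..N})"
    by (rule nn_integral_count_space_eq) (auto simp: g_def)
  also have "\<dots> = (\<Sum>j\<in>{1..N}. g j)"
    by (rule nn_integral_count_space_finite) simp
  finally show ?thesis by (simp add: g_def)
qed

end

lemma nn_sum_nat: "(\<And>k. 0 \<le> g k) \<Longrightarrow> summable g \<Longrightarrow> (\<integral>\<^sup>+k. ennreal (g k) \<partial>count_space UNIV) = ennreal (\<Sum>k. g k)"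
  by (simp add: nn_integral_count_space_nat suminf_ennreal2)

context qsys begin

lemma Psum: "i \<in> {1..N} \<Longrightarrow> (\<Sum>j\<in>{1..N}. \<Sum>k. a i j k) = 1"
  using P_stoch by (simp add: stochastic_mat_def)

lemma pB_suminf: "(\<Sum>b. pB b) = 1" using pB_sum by (simp add: sums_iff)
lemma pB_summable: "summable pB" using pB_sum by (simp add: sums_iff)

lemma kappa_total_nn: "i \<in> {1..N} \<Longrightarrow> (\<integral>\<^sup>+z. ennreal (\<kappa> i z) \<partial>count_space UNIV) = 1"
proof -
  assume i: "i \<in> {1..N}"
  have "(\<integral>\<^sup>+z. ennreal (\<kappa> i z) \<partial>count_space UNIV) =
     (\<integral>\<^sup>+z. ennreal (\<kappa> i z) * ((\<lambda>_. 1) (fst z) * (\<lambda>_. 1) (fst (snd z)) * (\<lambda>_. 1) (snd (snd z))) \<partial>count_space UNIV)"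
    by simp
  also have "\<dots> = (\<Sum>j\<in>{1..N}. 1 * (\<integral>\<^sup>+k. ennreal (a i j k) * 1 \<partial>count_space UNIV) * (\<integral>\<^sup>+b. ennreal (pB b) * 1 \<partial>count_space UNIV))"
    by (rule ks_nn[OF i])
  also have "\<dots> = (\<Sum>j\<in>{1..N}. ennreal (\<Sum>k. a i j k))"
    using a_summ i by (simp add: nn_sum_nat a_nonneg pB_nonneg pB_summable pB_suminf)
  also have "\<dots> = ennreal (\<Sum>j\<in>{1..N}. \<Sum>k. a i j k)"
    by (rule sum_ennreal) (use i in \<open>auto intro!: suminf_nonneg a_summ a_nonneg\<close>)
  finally show ?thesis using Psum[OF i] by simp
qed

lemma kappa_abs: "i \<in> {1..N} \<Longrightarrow> \<kappa> i abs_summable_on UNIV"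
  unfolding abs_summable_on_def
  by (rule integrableI_nonneg) (auto simp: kappa_nonneg kappa_total_nn)

lemma kappa_sum: assumes i: "i \<in> {1..N}" shows "infsetsum (\<kappa> i) UNIV = 1"
proof -
  have "ennreal (infsetsum (\<kappa> i) UNIV) = 1"
    using kappa_total_nn[OF i] kappa_abs[OF i]
    by (subst nn_integral_conv_infsetsum[symmetric]) (auto simp: kappa_nonneg)
  then show ?thesis by simp
qed

lemma ks:
  fixes \<psi> \<phi> cc :: "nat \<Rightarrow> complex"
  assumes i: "i \<in> {1..N}"
    and b1: "\<And>j. norm (\<psi> j) \<le> 1" and b2: "\<And>k. norm (\<phi> k) \<le> 1" and b3: "\<And>b. norm (cc b) \<le> 1"
  shows "infsetsum (\<lambda>z. \<kappa> i z *\<^sub>R (\<psi> (fst z) * \<phi> (fst (snd z)) * cc (snd (snd z)))) UNIV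
     = (\<Sum>j\<in>{1..N}. \<psi> j * (\<Sum>k. a i j k *\<^sub>R \<phi> k) * (\<Sum>b. pB b *\<^sub>R cc b))"
proof -
  define F where "F z = \<kappa> i z *\<^sub>R (\<psi> (fst z) * \<phi> (fst (snd z)) * cc (snd (snd z)))" for z
  have nF: "norm (F z) \<le> \<kappa> i z" for z
  proof -
    have "norm (\<psi> (fst z) * \<phi> (fst (snd z)) * cc (snd (snd z))) \<le> 1 * 1 * 1"
      unfolding norm_mult by (intro mult_mono b1 b2 b3) auto
    then show ?thesis unfolding F_def using kappa_nonneg[of i z]
      by (simp add: mult_left_le)
  qed
  have SF: "F abs_summable_on UNIV"
    by (rule abs_summable_on_comparison_test'[OF kappa_abs[OF i]]) (use nF in auto)
  have S1: "F abs_summable_on (UNIV \<times> UNIV)" using SF by simp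
  have step1: "infsetsum F UNIV = infsetsum (\<lambda>j. infsetsum (\<lambda>kb. F (j, kb)) UNIV) UNIV"
    using infsetsum_Times[OF _ _ S1] by simp
  have inner: "infsetsum (\<lambda>kb. F (j, kb)) UNIV =
      (if j \<in> {1..N} then \<psi> j * (\<Sum>k. a i j k *\<^sub>R \<phi> k) * (\<Sum>b. pB b *\<^sub>R cc b) else 0)" for j
  proof (cases "j \<in> {1..N}")
    case False
    then have "F (j, kb) = 0" for kb unfolding F_def \<kappa>_def by auto
    then show ?thesis using False by auto
  next
    case True
    have Sj: "(\<lambda>kb. F (j, kb)) abs_summable_on (UNIV \<times> UNIV)"
      using abs_summable_on_Sigma_project2[OF S1, of j] by simp
    have Fj: "F (j, k, b) = (\<psi> j * (a i j k *\<^sub>R \<phi> k)) * (pB b *\<^sub>R cc b)" for k b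
      using i True unfolding F_def \<kappa>_def by (simp add: scaleR_conv_of_real algebra_simps)
    have sa: "(\<lambda>k. a i j k *\<^sub>R \<phi> k) abs_summable_on UNIV"
      unfolding abs_summable_on_nat_iff'
      by (rule summable_comparison_test[OF _ a_summ[OF i True]])
         (use b2 a_nonneg in \<open>auto intro!: exI[of _ 0] simp: mult_left_le\<close>)
    have sb: "(\<lambda>b. pB b *\<^sub>R cc b) abs_summable_on UNIV"
      unfolding abs_summable_on_nat_iff'
      by (rule summable_comparison_test[OF _ pB_summable])
         (use b3 pB_nonneg in \<open>auto intro!: exI[of _ 0] simp: mult_left_le\<close>)
    have "infsetsum (\<lambda>kb. F (j, kb)) UNIV = infsetsum (\<lambda>k. infsetsum (\<lambda>b. F (j, k, b)) UNIV) UNIV"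
      using infsetsum_Times[OF _ _ Sj] by simp
    also have "\<dots> = infsetsum (\<lambda>k. (\<psi> j * (a i j k *\<^sub>R \<phi> k)) * infsetsum (\<lambda>b. pB b *\<^sub>R cc b) UNIV) UNIV"
      unfolding Fj by (subst infsetsum_cmult_right) (use sb in auto)
    also have "\<dots> = \<psi> j * infsetsum (\<lambda>k. a i j k *\<^sub>R \<phi> k) UNIV * infsetsum (\<lambda>b. pB b *\<^sub>R cc b) UNIV"
    proof -
      have "infsetsum (\<lambda>k. (\<psi> j * (a i j k *\<^sub>R \<phi> k)) * infsetsum (\<lambda>b. pB b *\<^sub>R cc b) UNIV) UNIV
          = infsetsum (\<lambda>k. \<psi> j * (a i j k *\<^sub>R \<phi> k)) UNIV * infsetsum (\<lambda>b. pB b *\<^sub>R cc b) UNIV"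
        by (rule infsetsum_cmult_left) (rule abs_summable_on_cmult_right[OF sa])
      moreover have "infsetsum (\<lambda>k. \<psi> j * (a i j k *\<^sub>R \<phi> k)) UNIV = \<psi> j * infsetsum (\<lambda>k. a i j k *\<^sub>R \<phi> k) UNIV"
        by (rule infsetsum_cmult_right) (rule sa)
      ultimately show ?thesis by simp
    qed
    also have "\<dots> = \<psi> j * (\<Sum>k. a i j k *\<^sub>R \<phi> k) * (\<Sum>b. pB b *\<^sub>R cc b)"
      using sa sb by (simp add: infsetsum_nat')
    finally show ?thesis using True by simp
  qed
  have "infsetsum (\<lambda>j. infsetsum (\<lambda>kb. F (j, kb)) UNIV) UNIV =
        infsetsum (\<lambda>j. infsetsum (\<lambda>kb. F (j, kb)) UNIV) {1..N}"
    by (rule infsetsum_cong_neutral) (auto simp: inner)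
  also have "\<dots> = (\<Sum>j\<in>{1..N}. \<psi> j * (\<Sum>k. a i j k *\<^sub>R \<phi> k) * (\<Sum>b. pB b *\<^sub>R cc b))"
    by (simp add: inner)
  finally show ?thesis using step1 by (simp add: F_def)
qed

end

context qsys begin

abbreviation X where "X \<equiv> Xproc X0 A B"

lemma X_meas[measurable]: "X n \<in> measurable M (count_space UNIV)"
proof -
  have "(\<lambda>\<omega>. xl (snd (H n \<omega>))) \<in> measurable M (count_space UNIV)" by measurable
  then show ?thesis by (simp add: X_H[abs_def])
qed

definition g :: "nat \<Rightarrow> nat \<Rightarrow> complex \<Rightarrow> complex" where
  "g n i z = integral\<^sup>L M (\<lambda>\<omega>. z ^ X n \<omega> * indicator {\<omega>'. J (Suc n) \<omega>' = i} \<omega>)"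

definition u :: "nat \<Rightarrow> nat \<Rightarrow> real" where
  "u n i = measure M {\<omega>\<in>space M. X n \<omega> = 0 \<and> J (Suc n) \<omega> = i}"

lemma ev_sets[measurable]: "{\<omega>\<in>space M. X n \<omega> = 0 \<and> J (Suc n) \<omega> = i} \<in> sets M"
  by measurable

lemma ind_meas[measurable]: "(\<lambda>\<omega>. indicator {\<omega>'. J m \<omega>' = i} \<omega> :: complex) \<in> borel_measurable M"
proof -
  have "(\<lambda>\<omega>. indicator {\<omega>'. J m \<omega>' = i} \<omega> :: complex) = (\<lambda>\<omega>. if J m \<omega> = i then 1 else 0)"
    by (auto simp: indicator_def)
  moreover have "(\<lambda>\<omega>. if J m \<omega> = i then 1 else (0::complex)) \<in> borel_measurable M" by measurable
  ultimately show ?thesis by simp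
qed

lemma bounded_int:
  fixes F :: "'s \<Rightarrow> complex"
  assumes "F \<in> borel_measurable M" "\<And>\<omega>. \<omega> \<in> space M \<Longrightarrow> norm (F \<omega>) \<le> C"
  shows "integrable M F"
proof -
  interpret prob_space M by (rule prob)
  show ?thesis using assms by (intro integrable_const_bound[where B=C]) auto
qed

lemma g0: "g n i 0 = complex_of_real (u n i)"
proof -
  interpret prob_space M by (rule prob)
  have "g n i 0 = integral\<^sup>L M (\<lambda>\<omega>. complex_of_real (indicator {\<omega>\<in>space M. X n \<omega> = 0 \<and> J (Suc n) \<omega> = i} \<omega>))"
    unfolding g_def by (intro Bochner_Integration.integral_cong refl) (auto simp: indicator_def power_0_left)
  also have "\<dots> = complex_of_real (u n i)"
    by (simp add: u_def)
  finally show ?thesis .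
qed

end

context qsys begin

lemma pow_meas[measurable]: "(\<lambda>\<omega>. (z::complex) ^ X n \<omega>) \<in> borel_measurable M"
  by measurable

lemma gf_scaleR: "gf c z = (\<Sum>k. c k *\<^sub>R z ^ k)"
  by (simp add: gf_def scaleR_conv_of_real)

lemma int_g: "integrable M (\<lambda>\<omega>. (z::complex) ^ X n \<omega> * indicator {\<omega>'. J (Suc n) \<omega>' = i} \<omega>)" if "norm z \<le> 1"
proof (rule bounded_int)
  show "(\<lambda>\<omega>. z ^ X n \<omega> * indicator {\<omega>'. J (Suc n) \<omega>' = i} \<omega>) \<in> borel_measurable M" by measurable
  show "norm (z ^ X n \<omega> * indicator {\<omega>'. J (Suc n) \<omega>' = i} \<omega>) \<le> 1" for \<omega>
    using that by (auto simp: norm_mult norm_power power_le_one indicator_def)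
qed

end

context qsys begin

lemma int_ind0: "integrable M (\<lambda>\<omega>. (0::complex) ^ X n \<omega> * indicator {\<omega>'. J (Suc n) \<omega>' = i} \<omega>)"
  by (rule int_g) simp

lemma sum_ind:
  assumes "J m \<omega> \<in> S" "finite S"
  shows "(\<Sum>i\<in>S. c i * (indicator {\<omega>'. J m \<omega>' = i} \<omega> * (V::complex))) = c (J m \<omega>) * V"
proof -
  have "(\<Sum>i\<in>S. c i * (indicator {\<omega>'. J m \<omega>' = i} \<omega> * V)) = (\<Sum>i\<in>S. if J m \<omega> = i then c i * V else 0)"
    by (rule sum.cong) (auto simp: indicator_def)
  then show ?thesis using assms by simp
qed

lemma rec1:
  fixes z :: complex
  assumes z: "norm z \<le> 1" and j: "j \<in> {1..N}"
  shows "z * g (Suc n) j z = (\<Sum>i\<in>{1..N}. gf (a i j) z * (g n i z - g n i 0 + gf pB z * g n i 0))"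
proof -
  interpret prob_space M by (rule prob)
  define G where "G h zz = (if fst zz = j then 1 else 0) * z ^ fst (snd zz) *
      (if xl (snd h) \<ge> 1 then z ^ xl (snd h) else z ^ snd (snd zz))" for h :: "nat \<times> (nat\<times>nat\<times>nat) list" and zz :: "nat\<times>nat\<times>nat"
  define R where "R h = infsetsum (\<lambda>zz. \<kappa> (lastJ h) zz *\<^sub>R G h zz) UNIV" for h
  define gB where "gB = gf pB z"
  have zp: "norm (z ^ m) \<le> 1" for m using z by (simp add: norm_power power_le_one)
  have bnd: "norm (G h zz) \<le> 1" for h zz
    unfolding G_def norm_mult using zp by (auto intro!: mult_le_one)
  have pt: "z * (z ^ X (Suc n) \<omega> * indicator {\<omega>'. J (Suc (Suc n)) \<omega>' = j} \<omega>) = G (H n \<omega>) (Z n \<omega>)"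
    if \<omega>: "\<omega> \<in> space M" for \<omega>
  proof -
    have b1: "B (Suc n) \<omega> \<ge> 1" using B_pos \<omega> by simp
    have ind: "indicator {\<omega>'. J (Suc (Suc n)) \<omega>' = j} \<omega> = (if J (Suc (Suc n)) \<omega> = j then 1 else (0::complex))"
      by (simp add: indicator_def)
    show ?thesis
    proof (cases "X n \<omega> \<ge> 1")
      case True
      have "z * z ^ X (Suc n) \<omega> = z ^ A (Suc n) \<omega> * z ^ X n \<omega>"
        using True by (simp add: power_add[symmetric] add.commute power_Suc[symmetric] Suc_diff_le)
      then show ?thesis using True unfolding G_def ind
        by (simp add: Z_def X_H[symmetric] mult_ac)
    next
      case False
      then have X0': "X n \<omega> = 0" by simp
      have "z * z ^ X (Suc n) \<omega> = z ^ A (Suc n) \<omega> * z ^ B (Suc n) \<omega>"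
        using X0' b1 by (simp add: power_add[symmetric] power_Suc[symmetric])
      then show ?thesis using False unfolding G_def ind
        by (simp add: Z_def X_H[symmetric] mult_ac)
    qed
  qed
  have Rpt: "R (H n \<omega>) = (\<Sum>i\<in>{1..N}. gf (a i j) z * (indicator {\<omega>'. J (Suc n) \<omega>' = i} \<omega> *
        (if X n \<omega> \<ge> 1 then z ^ X n \<omega> else gB)))"
    if \<omega>: "\<omega> \<in> space M" for \<omega>
  proof -
    define i0 where "i0 = J (Suc n) \<omega>"
    have i0: "i0 \<in> {1..N}" using J_range \<omega> by (simp add: i0_def)
    have li: "lastJ (H n \<omega>) = i0" by (simp add: i0_def J_H)
    define x where "x = xl (snd (H n \<omega>))"
    have x: "X n \<omega> = x" by (simp add: x_def X_H)
    define cc where "cc b = (if x \<ge> 1 then z ^ x else z ^ b)" for b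
    have Geq: "G (H n \<omega>) zz = (\<lambda>j'. if j' = j then 1 else 0) (fst zz) * (\<lambda>k. z ^ k) (fst (snd zz)) * cc (snd (snd zz))" for zz
      by (simp add: G_def cc_def x_def)
    have "R (H n \<omega>) = (\<Sum>j'\<in>{1..N}. (if j' = j then 1 else 0) * (\<Sum>k. a i0 j' k *\<^sub>R z ^ k) * (\<Sum>b. pB b *\<^sub>R cc b))"
      unfolding R_def li Geq by (rule ks[OF i0]) (auto simp: zp cc_def)
    also have "\<dots> = gf (a i0 j) z * (\<Sum>b. pB b *\<^sub>R cc b)"
      using j by (simp add: gf_scaleR if_distrib[of "\<lambda>c. c * _"] cong: if_cong)
    also have "(\<Sum>b. pB b *\<^sub>R cc b) = (if x \<ge> 1 then z ^ x else gB)"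
    proof (cases "x \<ge> 1")
      case True
      then have "(\<Sum>b. pB b *\<^sub>R cc b) = (\<Sum>b. pB b) *\<^sub>R z ^ x"
        by (simp add: cc_def suminf_scaleR_left pB_summable)
      then show ?thesis using True by (simp add: pB_suminf)
    next
      case False
      then show ?thesis by (simp add: cc_def gB_def gf_scaleR)
    qed
    also have "gf (a i0 j) z * (if x \<ge> 1 then z ^ x else gB) = (\<Sum>i\<in>{1..N}. gf (a i j) z * (indicator {\<omega>'. J (Suc n) \<omega>' = i} \<omega> *
        (if X n \<omega> \<ge> 1 then z ^ X n \<omega> else gB)))"
      using i0 unfolding i0_def by (subst sum_ind) (auto simp: x)
    finally show ?thesis .
  qed
  have decomp: "indicator {\<omega>'. J (Suc n) \<omega>' = i} \<omega> * (if X n \<omega> \<ge> 1 then z ^ X n \<omega> else gB)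
     = z ^ X n \<omega> * indicator {\<omega>'. J (Suc n) \<omega>' = i} \<omega> - 0 ^ X n \<omega> * indicator {\<omega>'. J (Suc n) \<omega>' = i} \<omega>
       + gB * (0 ^ X n \<omega> * indicator {\<omega>'. J (Suc n) \<omega>' = i} \<omega>)" for \<omega> i
    by (cases "X n \<omega> = 0") (auto simp: power_0_left)
  have int1: "integrable M (\<lambda>\<omega>. indicator {\<omega>'. J (Suc n) \<omega>' = i} \<omega> * (if X n \<omega> \<ge> 1 then z ^ X n \<omega> else gB))" for i
    unfolding decomp using int_g[OF z] int_ind0 by auto
  have int2: "integral\<^sup>L M (\<lambda>\<omega>. indicator {\<omega>'. J (Suc n) \<omega>' = i} \<omega> * (if X n \<omega> \<ge> 1 then z ^ X n \<omega> else gB))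
      = g n i z - g n i 0 + gB * g n i 0" for i
    unfolding decomp g_def using int_g[OF z] int_ind0 by simp
  have "z * g (Suc n) j z = integral\<^sup>L M (\<lambda>\<omega>. z * (z ^ X (Suc n) \<omega> * indicator {\<omega>'. J (Suc (Suc n)) \<omega>' = j} \<omega>))"
    by (simp add: g_def)
  also have "\<dots> = integral\<^sup>L M (\<lambda>\<omega>. G (H n \<omega>) (Z n \<omega>))"
    by (intro Bochner_Integration.integral_cong refl) (rule pt)
  also have "\<dots> = integral\<^sup>L M (\<lambda>\<omega>. R (H n \<omega>))"
    unfolding R_def by (rule tower[OF bnd])
  also have "\<dots> = integral\<^sup>L M (\<lambda>\<omega>. \<Sum>i\<in>{1..N}. gf (a i j) z * (indicator {\<omega>'. J (Suc n) \<omega>' = i} \<omega> *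
        (if X n \<omega> \<ge> 1 then z ^ X n \<omega> else gB)))"
    by (intro Bochner_Integration.integral_cong refl) (simp add: Rpt)
  also have "\<dots> = (\<Sum>i\<in>{1..N}. gf (a i j) z * (g n i z - g n i 0 + gB * g n i 0))"
    using int1 by (simp add: int2[simplified])
  finally show ?thesis by (simp add: gB_def)
qed

end

context qsys begin

lemma g_lim: "i \<in> {1..N} \<Longrightarrow> norm z \<le> 1 \<Longrightarrow> (\<lambda>n. g n i z) \<longlonglongrightarrow> f i z"
  unfolding g_def by (rule f_lim)

lemma fixed_eq:
  fixes z :: complex
  assumes z: "norm z \<le> 1" and j: "j \<in> {1..N}"
  shows "z * f j z = (\<Sum>i\<in>{1..N}. gf (a i j) z * (f i z - f i 0 + gf pB z * f i 0))"
proof -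
  have L1: "(\<lambda>n. z * g (Suc n) j z) \<longlonglongrightarrow> z * f j z"
    using g_lim[OF j z] by (intro tendsto_mult_left) (rule LIMSEQ_Suc)
  have L2: "(\<lambda>n. \<Sum>i\<in>{1..N}. gf (a i j) z * (g n i z - g n i 0 + gf pB z * g n i 0))
      \<longlonglongrightarrow> (\<Sum>i\<in>{1..N}. gf (a i j) z * (f i z - f i 0 + gf pB z * f i 0))"
    using z by (intro tendsto_sum tendsto_mult tendsto_const tendsto_add tendsto_diff g_lim) auto
  have eq: "(\<lambda>n. z * g (Suc n) j z) = (\<lambda>n. \<Sum>i\<in>{1..N}. gf (a i j) z * (g n i z - g n i 0 + gf pB z * g n i 0))"
    using rec1[OF z j] by presburger
  show ?thesis using L1 L2 unfolding eq by (rule LIMSEQ_unique)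
qed

lemma part1:
  fixes z :: complex
  assumes z: "norm z \<le> 1" and j: "j \<in> {1..N}"
  shows "(z - gf (a j j) z) * f j z - (\<Sum>i\<in>{1..N} - {j}. gf (a i j) z * f i z)
              = (gf pB z - 1) * (\<Sum>i\<in>{1..N}. gf (a i j) z * f i 0)"
proof -
  have e1: "gf (a i j) z * (f i z - f i 0 + gf pB z * f i 0) = gf (a i j) z * f i z + (gf pB z - 1) * (gf (a i j) z * f i 0)" for i
    by (simp add: algebra_simps)
  have "z * f j z = (\<Sum>i\<in>{1..N}. gf (a i j) z * f i z) + (gf pB z - 1) * (\<Sum>i\<in>{1..N}. gf (a i j) z * f i 0)"
    unfolding fixed_eq[OF z j] e1 by (simp only: sum.distrib sum_distrib_left)
  moreover have "(\<Sum>i\<in>{1..N}. gf (a i j) z * f i z) = gf (a j j) z * f j z + (\<Sum>i\<in>{1..N} - {j}. gf (a i j) z * f i z)"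
    using j by (simp add: sum.remove)
  ultimately show ?thesis by (simp add: field_simps)
qed

end

lemma stat_zero_prop:
  fixes P :: "nat \<Rightarrow> nat \<Rightarrow> real" and u :: "nat \<Rightarrow> real"
  assumes stoch: "stochastic_mat N P" and irr: "irreducible_mat N P"
    and un: "\<And>i. i \<in> {1..N} \<Longrightarrow> u i \<ge> 0"
    and us: "\<And>j. j \<in> {1..N} \<Longrightarrow> (\<Sum>i\<in>{1..N}. u i * P i j) = u j"
    and j: "j \<in> {1..N}" and uj: "u j = 0" and i: "i \<in> {1..N}"
  shows "u i = 0"
proof -
  define R where "R = {(k, l). k \<in> {1..N} \<and> l \<in> {1..N} \<and> P k l > 0}"
  have base1: "u l = 0 \<Longrightarrow> (k, l) \<in> R \<Longrightarrow> u k = 0" for k l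
  proof -
    assume ul: "u l = 0" and kl: "(k, l) \<in> R"
    then have k: "k \<in> {1..N}" and l: "l \<in> {1..N}" and pkl: "P k l > 0" by (auto simp: R_def)
    have Pn: "\<And>i. i \<in> {1..N} \<Longrightarrow> P i l \<ge> 0" using stoch l by (simp add: stochastic_mat_def)
    have "u k * P k l \<le> (\<Sum>i\<in>{1..N}. u i * P i l)"
      by (rule member_le_sum) (use k un Pn in auto)
    then have "u k * P k l \<le> 0" using us[OF l] ul by simp
    moreover have "u k * P k l \<ge> 0" using un[OF k] pkl by simp
    ultimately have "u k * P k l = 0" by linarith
    then show "u k = 0" using pkl by simp
  qed
  have "(k, l) \<in> R\<^sup>+ \<Longrightarrow> u l = 0 \<longrightarrow> u k = 0" for k l
  proof (induction rule: trancl_induct)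
    case (base y) then show ?case using base1 by blast
  next
    case (step y z) then show ?case using base1 by blast
  qed
  moreover have "(i, j) \<in> R\<^sup>+" using irr i j by (simp add: irreducible_mat_def R_def)
  ultimately show ?thesis using uj by blast
qed

lemma stat_unique:
  fixes P :: "nat \<Rightarrow> nat \<Rightarrow> real" and v \<pi> :: "nat \<Rightarrow> real"
  assumes stoch: "stochastic_mat N P" and irr: "irreducible_mat N P"
    and pi: "stationary_dist N P \<pi>"
    and vs: "\<And>j. j \<in> {1..N} \<Longrightarrow> (\<Sum>i\<in>{1..N}. v i * P i j) = v j"
    and j: "j \<in> {1..N}"
  shows "v j = (\<Sum>i\<in>{1..N}. v i) * \<pi> j"
proof -
  define s where "s = (\<Sum>i\<in>{1..N}. v i)"
  define w where "w i = v i - s * \<pi> i" for i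
  have Pn: "\<And>i j. i \<in> {1..N} \<Longrightarrow> j \<in> {1..N} \<Longrightarrow> P i j \<ge> 0" using stoch by (simp add: stochastic_mat_def)
  have Ps: "\<And>i. i \<in> {1..N} \<Longrightarrow> (\<Sum>j\<in>{1..N}. P i j) = 1" using stoch by (simp add: stochastic_mat_def)
  have pis: "\<And>j. j \<in> {1..N} \<Longrightarrow> (\<Sum>i\<in>{1..N}. \<pi> i * P i j) = \<pi> j" and pisum: "(\<Sum>i\<in>{1..N}. \<pi> i) = 1"
    using pi by (auto simp: stationary_dist_def)
  have ws: "(\<Sum>i\<in>{1..N}. w i * P i j) = w j" if "j \<in> {1..N}" for j
  proof -
    have "(\<Sum>i\<in>{1..N}. w i * P i j) = (\<Sum>i\<in>{1..N}. v i * P i j) - s * (\<Sum>i\<in>{1..N}. \<pi> i * P i j)"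
      by (simp add: w_def left_diff_distrib sum_subtractf sum_distrib_left mult.assoc)
    then show ?thesis using vs[OF that] pis[OF that] by (simp add: w_def)
  qed
  have wsum: "(\<Sum>i\<in>{1..N}. w i) = 0"
    using pisum by (simp add: w_def sum_subtractf s_def sum_distrib_left[symmetric])
  have le: "\<bar>w j\<bar> \<le> (\<Sum>i\<in>{1..N}. \<bar>w i\<bar> * P i j)" if "j \<in> {1..N}" for j
  proof -
    have "\<bar>w j\<bar> = \<bar>\<Sum>i\<in>{1..N}. w i * P i j\<bar>" using ws[OF that] by simp
    also have "\<dots> \<le> (\<Sum>i\<in>{1..N}. \<bar>w i * P i j\<bar>)" by (rule sum_abs)
    also have "\<dots> = (\<Sum>i\<in>{1..N}. \<bar>w i\<bar> * P i j)"
      by (rule sum.cong) (use Pn that in \<open>auto simp: abs_mult\<close>)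
    finally show ?thesis .
  qed
  have tot: "(\<Sum>j\<in>{1..N}. \<Sum>i\<in>{1..N}. \<bar>w i\<bar> * P i j) = (\<Sum>j\<in>{1..N}. \<bar>w j\<bar>)"
  proof -
    have "(\<Sum>j\<in>{1..N}. \<Sum>i\<in>{1..N}. \<bar>w i\<bar> * P i j) = (\<Sum>i\<in>{1..N}. \<bar>w i\<bar> * (\<Sum>j\<in>{1..N}. P i j))"
      by (subst sum.swap) (simp add: sum_distrib_left)
    also have "\<dots> = (\<Sum>i\<in>{1..N}. \<bar>w i\<bar>)" by (intro sum.cong refl) (metis Ps mult.right_neutral)
    finally show ?thesis .
  qed
  have aeq: "(\<Sum>i\<in>{1..N}. \<bar>w i\<bar> * P i j) = \<bar>w j\<bar>" if jj: "j \<in> {1..N}" for j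
  proof (rule ccontr)
    assume ne: "(\<Sum>i\<in>{1..N}. \<bar>w i\<bar> * P i j) \<noteq> \<bar>w j\<bar>"
    have "(\<Sum>j\<in>{1..N}. \<bar>w j\<bar>) < (\<Sum>j\<in>{1..N}. \<Sum>i\<in>{1..N}. \<bar>w i\<bar> * P i j)"
    proof (rule sum_strict_mono_ex1)
      show "\<forall>x\<in>{1..N}. \<bar>w x\<bar> \<le> (\<Sum>i\<in>{1..N}. \<bar>w i\<bar> * P i x)" using le by blast
      show "\<exists>a\<in>{1..N}. \<bar>w a\<bar> < (\<Sum>i\<in>{1..N}. \<bar>w i\<bar> * P i a)"
        using le[OF jj] ne jj by (intro bexI[of _ j]) auto
    qed simp
    then show False using tot by simp
  qed
  define p where "p i = \<bar>w i\<bar> + w i" for i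
  define m where "m i = \<bar>w i\<bar> - w i" for i
  have ps: "(\<Sum>i\<in>{1..N}. p i * P i j) = p j" if "j \<in> {1..N}" for j
    using aeq[OF that] ws[OF that] by (simp add: p_def algebra_simps sum.distrib)
  have ms: "(\<Sum>i\<in>{1..N}. m i * P i j) = m j" if "j \<in> {1..N}" for j
    using aeq[OF that] ws[OF that] by (simp add: m_def algebra_simps sum_subtractf)
  have pn: "p i \<ge> 0" "m i \<ge> 0" for i by (auto simp: p_def m_def)
  have "w j = 0"
  proof (rule ccontr)
    assume "w j \<noteq> 0"
    then consider "w j > 0" | "w j < 0" by linarith
    then show False
    proof cases
      case 1
      then have "m j = 0" by (simp add: m_def)
      then have "m i = 0" if "i \<in> {1..N}" for i
        using stat_zero_prop[OF stoch irr _ ms j _ that] pn by auto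
      then have "w i \<ge> 0" if "i \<in> {1..N}" for i using that unfolding m_def by (metis abs_ge_zero eq_iff_diff_eq_0)
      then have "w j \<le> (\<Sum>i\<in>{1..N}. w i)" by (intro member_le_sum j) auto
      then show False using 1 wsum by simp
    next
      case 2
      then have "p j = 0" by (simp add: p_def)
      then have "p i = 0" if "i \<in> {1..N}" for i
        using stat_zero_prop[OF stoch irr _ ps j _ that] pn by auto
      then have "- w i \<ge> 0" if "i \<in> {1..N}" for i using that unfolding p_def by (metis abs_ge_zero add.commute add_eq_0_iff)
      then have "- w j \<le> (\<Sum>i\<in>{1..N}. - w i)" by (intro member_le_sum j) auto
      then show False using 2 wsum by (simp add: sum_negf)
    qed
  qed
  then show ?thesis by (simp add: w_def s_def)
qed


context qsys begin

definition gr :: "nat \<Rightarrow> nat \<Rightarrow> real \<Rightarrow> real" where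
  "gr n i t = integral\<^sup>L M (\<lambda>\<omega>. t ^ X n \<omega> * indicator {\<omega>'. J (Suc n) \<omega>' = i} \<omega>)"

definition Fr :: "nat \<Rightarrow> real \<Rightarrow> real" where
  "Fr i t = Re (f i (complex_of_real t))"

definition q :: "nat \<Rightarrow> nat \<Rightarrow> real" where
  "q n i = measure M {\<omega>\<in>space M. J (Suc n) \<omega> = i}"

lemma g_real: "g n i (complex_of_real t) = complex_of_real (gr n i t)"
proof -
  have "g n i (complex_of_real t) = integral\<^sup>L M (\<lambda>\<omega>. complex_of_real (t ^ X n \<omega> * indicator {\<omega>'. J (Suc n) \<omega>' = i} \<omega>))"
    unfolding g_def by (intro Bochner_Integration.integral_cong refl) (simp add: indicator_def)
  then show ?thesis unfolding gr_def by (metis integral_complex_of_real)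
qed

lemma gr_lim: assumes i: "i \<in> {1..N}" and t: "t \<in> {0..1}"
  shows "(\<lambda>n. gr n i t) \<longlonglongrightarrow> Fr i t" and "f i (complex_of_real t) = complex_of_real (Fr i t)"
proof -
  have L: "(\<lambda>n. complex_of_real (gr n i t)) \<longlonglongrightarrow> f i (complex_of_real t)"
    using g_lim[OF i, of "complex_of_real t"] t by (simp add: g_real)
  from tendsto_Re[OF L] show "(\<lambda>n. gr n i t) \<longlonglongrightarrow> Fr i t" by (simp add: Fr_def)
  from tendsto_Im[OF L] have "(\<lambda>n. 0) \<longlonglongrightarrow> Im (f i (complex_of_real t))" by simp
  then have "Im (f i (complex_of_real t)) = 0" using LIMSEQ_unique tendsto_const by blast
  then show "f i (complex_of_real t) = complex_of_real (Fr i t)"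
    by (simp add: Fr_def complex_eq_iff)
qed

lemma gr_nonneg: "t \<ge> 0 \<Longrightarrow> gr n i t \<ge> 0"
  unfolding gr_def by (intro integral_nonneg_AE) (auto simp: indicator_def)

lemma Fr_nonneg: "i \<in> {1..N} \<Longrightarrow> t \<in> {0..1} \<Longrightarrow> Fr i t \<ge> 0"
  using gr_lim(1) gr_nonneg by (intro LIMSEQ_le_const[of "\<lambda>n. gr n i t"]) auto

lemma gr_1: "gr n i 1 = q n i"
proof -
  interpret prob_space M by (rule prob)
  have "gr n i 1 = integral\<^sup>L M (indicator {\<omega>\<in>space M. J (Suc n) \<omega> = i})"
    unfolding gr_def by (intro Bochner_Integration.integral_cong refl) (simp add: indicator_def)
  also have "\<dots> = q n i" by (simp add: q_def)
  finally show ?thesis .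
qed

lemma gr_0: "gr n i 0 = u n i"
proof -
  interpret prob_space M by (rule prob)
  have "gr n i 0 = integral\<^sup>L M (indicator {\<omega>\<in>space M. X n \<omega> = 0 \<and> J (Suc n) \<omega> = i})"
    unfolding gr_def by (intro Bochner_Integration.integral_cong refl) (auto simp: indicator_def power_0_left)
  also have "\<dots> = u n i" by (simp add: u_def)
  finally show ?thesis .
qed

lemma q_sum: "(\<Sum>i\<in>{1..N}. q n i) = 1"
proof -
  interpret prob_space M by (rule prob)
  have "(\<Sum>i\<in>{1..N}. q n i) = measure M (\<Union>i\<in>{1..N}. {\<omega>\<in>space M. J (Suc n) \<omega> = i})"
    unfolding q_def by (rule finite_measure_finite_Union[symmetric]) (auto simp: disjoint_family_on_def)
  also have "(\<Union>i\<in>{1..N}. {\<omega>\<in>space M. J (Suc n) \<omega> = i}) = space M"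
    using J_range[of "Suc n"] by auto
  finally show ?thesis by (simp add: prob_space)
qed

lemma gf_one: "(\<And>k. c k \<ge> 0) \<Longrightarrow> summable c \<Longrightarrow> gf c 1 = complex_of_real (\<Sum>k. c k)"
  unfolding gf_def by (simp add: suminf_of_real)

lemma Fr1_stat: "j \<in> {1..N} \<Longrightarrow> (\<Sum>i\<in>{1..N}. Fr i 1 * (\<Sum>k. a i j k)) = Fr j 1"
proof -
  assume j: "j \<in> {1..N}"
  have "1 * f j 1 = (\<Sum>i\<in>{1..N}. gf (a i j) 1 * (f i 1 - f i 0 + gf pB 1 * f i 0))"
    by (rule fixed_eq[OF _ j]) simp
  also have "\<dots> = (\<Sum>i\<in>{1..N}. complex_of_real (\<Sum>k. a i j k) * f i 1)"
    by (intro sum.cong refl) (use j in \<open>simp add: gf_one a_nonneg a_summ pB_nonneg pB_summable pB_suminf\<close>)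
  finally have "f j 1 = (\<Sum>i\<in>{1..N}. complex_of_real (\<Sum>k. a i j k) * f i 1)" by simp
  then have "Re (f j 1) = (\<Sum>i\<in>{1..N}. (\<Sum>k. a i j k) * Re (f i 1))" by simp
  then show ?thesis by (simp add: Fr_def mult.commute)
qed

lemma Fr1_sum: "(\<Sum>i\<in>{1..N}. Fr i 1) = 1"
proof -
  have "(\<lambda>n. \<Sum>i\<in>{1..N}. gr n i 1) \<longlonglongrightarrow> (\<Sum>i\<in>{1..N}. Fr i 1)"
    by (intro tendsto_sum gr_lim(1)) auto
  moreover have "(\<lambda>n. \<Sum>i\<in>{1..N}. gr n i 1) = (\<lambda>n. 1)" using q_sum by (simp add: gr_1)
  ultimately show ?thesis using LIMSEQ_unique tendsto_const by metis
qed

lemma Fr1_pi: "i \<in> {1..N} \<Longrightarrow> Fr i 1 = \<pi> i"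
  using stat_unique[OF P_stoch P_irred pi_stat, of "\<lambda>i. Fr i 1" i] Fr1_stat Fr1_sum by simp

end

context qsys begin

definition \<alpha> :: "nat \<Rightarrow> real" where
  "\<alpha> i = (\<Sum>j\<in>{1..N}. \<Sum>k. real k * a i j k)"

lemma alpha_nonneg: "i \<in> {1..N} \<Longrightarrow> \<alpha> i \<ge> 0"
  unfolding \<alpha>_def by (intro sum_nonneg suminf_nonneg alpha_fin) (auto simp: a_nonneg)

lemma inner_drift:
  assumes i: "i \<in> {1..N}" and EB: "summable (\<lambda>k. real k * pB k)"
  shows "(\<integral>\<^sup>+z. ennreal (\<kappa> i z) * (of_nat x + of_nat (fst (snd z)) + (if x = 0 then of_nat (snd (snd z)) else 0)) \<partial>count_space UNIV)
     = of_nat x + ennreal (\<alpha> i) + (if x = 0 then ennreal (\<Sum>b. real b * pB b) else 0)"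
proof -
  have Pn: "(\<Sum>k. a i j k) \<ge> 0" if "j \<in> {1..N}" for j by (intro suminf_nonneg a_summ[OF i that]) (simp_all add: a_nonneg)
  have a1: "(\<integral>\<^sup>+k. ennreal (a i j k) * 1 \<partial>count_space UNIV) = ennreal (\<Sum>k. a i j k)" if "j \<in> {1..N}" for j
    using nn_sum_nat[of "a i j", OF a_nonneg a_summ[OF i that]] by simp
  have ak: "(\<integral>\<^sup>+k. ennreal (a i j k) * of_nat k \<partial>count_space UNIV) = ennreal (\<Sum>k. real k * a i j k)" if "j \<in> {1..N}" for j
  proof -
    have "(\<integral>\<^sup>+k. ennreal (a i j k) * of_nat k \<partial>count_space UNIV) = (\<integral>\<^sup>+k. ennreal (real k * a i j k) \<partial>count_space UNIV)"
      by (intro nn_integral_cong) (simp add: ennreal_mult a_nonneg ennreal_of_nat_eq_real_of_nat mult.commute)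
    also have "\<dots> = ennreal (\<Sum>k. real k * a i j k)"
      by (rule nn_sum_nat) (simp_all add: a_nonneg alpha_fin[OF i that])
    finally show ?thesis .
  qed
  have b1: "(\<integral>\<^sup>+b. ennreal (pB b) * 1 \<partial>count_space UNIV) = 1"
    using nn_sum_nat[of pB] by (simp add: pB_nonneg pB_summable pB_suminf)
  have bb: "(\<integral>\<^sup>+b. ennreal (pB b) * of_nat b \<partial>count_space UNIV) = ennreal (\<Sum>b. real b * pB b)"
  proof -
    have "(\<integral>\<^sup>+b. ennreal (pB b) * of_nat b \<partial>count_space UNIV) = (\<integral>\<^sup>+b. ennreal (real b * pB b) \<partial>count_space UNIV)"
      by (intro nn_integral_cong) (simp add: ennreal_mult pB_nonneg ennreal_of_nat_eq_real_of_nat mult.commute)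
    also have "\<dots> = ennreal (\<Sum>b. real b * pB b)"
      by (rule nn_sum_nat) (simp_all add: pB_nonneg EB)
    finally show ?thesis .
  qed
  have T1: "(\<integral>\<^sup>+z. ennreal (\<kappa> i z) * of_nat x \<partial>count_space UNIV) = of_nat x"
    by (simp add: nn_integral_multc kappa_total_nn[OF i])
  have T2: "(\<integral>\<^sup>+z. ennreal (\<kappa> i z) * of_nat (fst (snd z)) \<partial>count_space UNIV) = ennreal (\<alpha> i)"
  proof -
    have "(\<integral>\<^sup>+z. ennreal (\<kappa> i z) * of_nat (fst (snd z)) \<partial>count_space UNIV)
        = (\<integral>\<^sup>+z. ennreal (\<kappa> i z) * ((\<lambda>_. 1) (fst z) * (\<lambda>k. of_nat k) (fst (snd z)) * (\<lambda>_. 1) (snd (snd z))) \<partial>count_space UNIV)"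
      by simp
    also have "\<dots> = (\<Sum>j\<in>{1..N}. 1 * (\<integral>\<^sup>+k. ennreal (a i j k) * of_nat k \<partial>count_space UNIV) * (\<integral>\<^sup>+b. ennreal (pB b) * 1 \<partial>count_space UNIV))"
      by (rule ks_nn[OF i])
    also have "\<dots> = (\<Sum>j\<in>{1..N}. ennreal (\<Sum>k. real k * a i j k))"
      by (intro sum.cong refl) (simp add: ak b1[simplified])
    also have "\<dots> = ennreal (\<alpha> i)"
      unfolding \<alpha>_def by (rule sum_ennreal) (auto intro!: suminf_nonneg simp: a_nonneg alpha_fin[OF i])
    finally show ?thesis .
  qed
  have T3: "(\<integral>\<^sup>+z. ennreal (\<kappa> i z) * of_nat (snd (snd z)) \<partial>count_space UNIV) = ennreal (\<Sum>b. real b * pB b)"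
  proof -
    have "(\<integral>\<^sup>+z. ennreal (\<kappa> i z) * of_nat (snd (snd z)) \<partial>count_space UNIV)
        = (\<integral>\<^sup>+z. ennreal (\<kappa> i z) * ((\<lambda>_. 1) (fst z) * (\<lambda>_. 1) (fst (snd z)) * (\<lambda>b. of_nat b) (snd (snd z))) \<partial>count_space UNIV)"
      by simp
    also have "\<dots> = (\<Sum>j\<in>{1..N}. 1 * (\<integral>\<^sup>+k. ennreal (a i j k) * 1 \<partial>count_space UNIV) * (\<integral>\<^sup>+b. ennreal (pB b) * of_nat b \<partial>count_space UNIV))"
      by (rule ks_nn[OF i])
    also have "\<dots> = (\<Sum>j\<in>{1..N}. ennreal (\<Sum>k. a i j k)) * ennreal (\<Sum>b. real b * pB b)"
      by (simp add: a1[simplified] bb sum_distrib_right)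
    also have "(\<Sum>j\<in>{1..N}. ennreal (\<Sum>k. a i j k)) = 1"
      using Psum[OF i] by (subst sum_ennreal) (auto simp: Pn)
    finally show ?thesis by simp
  qed
  have "(\<integral>\<^sup>+z. ennreal (\<kappa> i z) * (of_nat x + of_nat (fst (snd z)) + (if x = 0 then of_nat (snd (snd z)) else 0)) \<partial>count_space UNIV)
     = (\<integral>\<^sup>+z. ennreal (\<kappa> i z) * of_nat x + ennreal (\<kappa> i z) * of_nat (fst (snd z)) + (if x = 0 then ennreal (\<kappa> i z) * of_nat (snd (snd z)) else 0) \<partial>count_space UNIV)"
    by (intro nn_integral_cong) (simp add: distrib_left)
  also have "\<dots> = (\<integral>\<^sup>+z. ennreal (\<kappa> i z) * of_nat x \<partial>count_space UNIV) + (\<integral>\<^sup>+z. ennreal (\<kappa> i z) * of_nat (fst (snd z)) \<partial>count_space UNIV)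
      + (\<integral>\<^sup>+z. (if x = 0 then ennreal (\<kappa> i z) * of_nat (snd (snd z)) else 0) \<partial>count_space UNIV)"
    by (simp add: nn_integral_add)
  also have "\<dots> = of_nat x + ennreal (\<alpha> i) + (if x = 0 then ennreal (\<Sum>b. real b * pB b) else 0)"
    by (simp add: T1 T2 T3)
  finally show ?thesis .
qed

end

context qsys begin

lemma sum_ind_nn:
  assumes "\<omega> \<in> space M" and "P \<omega>"
  shows "ennreal (c (J (Suc n) \<omega>)) = (\<Sum>i\<in>{1..N}. ennreal (c i) * indicator {\<omega>\<in>space M. P \<omega> \<and> J (Suc n) \<omega> = i} \<omega>)"
proof -
  have r: "J (Suc n) \<omega> \<in> {1..N}" using J_range assms by simp
  have "(\<Sum>i\<in>{1..N}. ennreal (c i) * indicator {\<omega>\<in>space M. P \<omega> \<and> J (Suc n) \<omega> = i} \<omega>)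
      = (\<Sum>i\<in>{1..N}. if J (Suc n) \<omega> = i then ennreal (c i) else 0)"
    by (intro sum.cong refl) (use assms in \<open>auto simp: indicator_def\<close>)
  also have "\<dots> = ennreal (c (J (Suc n) \<omega>))" using r by simp
  finally show ?thesis by simp
qed

lemma drift_step:
  assumes EB: "summable (\<lambda>k. real k * pB k)"
  shows "(\<integral>\<^sup>+\<omega>. of_nat (X (Suc n) \<omega>) \<partial>M) + 1 = (\<integral>\<^sup>+\<omega>. of_nat (X n \<omega>) \<partial>M)
     + ennreal (\<Sum>i\<in>{1..N}. \<alpha> i * q n i) + ennreal ((\<Sum>b. real b * pB b) * (\<Sum>i\<in>{1..N}. u n i))"
proof -
  interpret prob_space M by (rule prob)
  define EBv where "EBv = (\<Sum>b. real b * pB b)"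
  have EBn: "EBv \<ge> 0" unfolding EBv_def by (intro suminf_nonneg EB) (simp add: pB_nonneg)
  define G where "G h zz = (of_nat (xl (snd h)) + of_nat (fst (snd zz)) + (if xl (snd h) = 0 then of_nat (snd (snd zz)) else 0) :: ennreal)"
    for h :: "nat \<times> (nat\<times>nat\<times>nat) list" and zz :: "nat\<times>nat\<times>nat"
  have pt: "of_nat (X (Suc n) \<omega>) + 1 = G (H n \<omega>) (Z n \<omega>)" if \<omega>: "\<omega> \<in> space M" for \<omega>
  proof -
    have b1: "B (Suc n) \<omega> \<ge> 1" using B_pos \<omega> by simp
    have E: "X (Suc n) \<omega> + 1 = X n \<omega> + A (Suc n) \<omega> + (if X n \<omega> = 0 then B (Suc n) \<omega> else 0)"
      using b1 by auto
    have "(of_nat (X (Suc n) \<omega>) :: ennreal) + 1 = of_nat (X (Suc n) \<omega> + 1)"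
      by (simp only: of_nat_add of_nat_1)
    also have "\<dots> = of_nat (X n \<omega> + A (Suc n) \<omega> + (if X n \<omega> = 0 then B (Suc n) \<omega> else 0))"
      by (simp only: E)
    also have "\<dots> = G (H n \<omega>) (Z n \<omega>)" by (simp add: G_def X_H Z_def)
    finally show ?thesis .
  qed
  have "(\<integral>\<^sup>+\<omega>. of_nat (X (Suc n) \<omega>) \<partial>M) + 1 = (\<integral>\<^sup>+\<omega>. of_nat (X (Suc n) \<omega>) + 1 \<partial>M)"
    by (subst nn_integral_add) (auto simp: emeasure_space_1)
  also have "\<dots> = (\<integral>\<^sup>+\<omega>. G (H n \<omega>) (Z n \<omega>) \<partial>M)"
    by (intro nn_integral_cong) (rule pt)
  also have "\<dots> = (\<integral>\<^sup>+\<omega>. (\<integral>\<^sup>+z. ennreal (\<kappa> (lastJ (H n \<omega>)) z) * G (H n \<omega>) z \<partial>count_space UNIV) \<partial>M)"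
    by (rule tower_nn)
  also have "\<dots> = (\<integral>\<^sup>+\<omega>. of_nat (X n \<omega>) + ennreal (\<alpha> (J (Suc n) \<omega>)) + (if X n \<omega> = 0 then ennreal EBv else 0) \<partial>M)"
  proof (intro nn_integral_cong)
    fix \<omega> assume \<omega>: "\<omega> \<in> space M"
    have r: "J (Suc n) \<omega> \<in> {1..N}" using J_range \<omega> by simp
    show "(\<integral>\<^sup>+z. ennreal (\<kappa> (lastJ (H n \<omega>)) z) * G (H n \<omega>) z \<partial>count_space UNIV)
       = of_nat (X n \<omega>) + ennreal (\<alpha> (J (Suc n) \<omega>)) + (if X n \<omega> = 0 then ennreal EBv else 0)"
      unfolding G_def J_H[symmetric] X_H[symmetric] EBv_def by (rule inner_drift[OF r EB])
  qed
  also have "\<dots> = (\<integral>\<^sup>+\<omega>. of_nat (X n \<omega>) \<partial>M) + (\<integral>\<^sup>+\<omega>. ennreal (\<alpha> (J (Suc n) \<omega>)) \<partial>M)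
      + (\<integral>\<^sup>+\<omega>. (if X n \<omega> = 0 then ennreal EBv else 0) \<partial>M)"
    by (simp add: nn_integral_add)
  also have "(\<integral>\<^sup>+\<omega>. ennreal (\<alpha> (J (Suc n) \<omega>)) \<partial>M) = ennreal (\<Sum>i\<in>{1..N}. \<alpha> i * q n i)"
  proof -
    have "(\<integral>\<^sup>+\<omega>. ennreal (\<alpha> (J (Suc n) \<omega>)) \<partial>M) =
      (\<integral>\<^sup>+\<omega>. (\<Sum>i\<in>{1..N}. ennreal (\<alpha> i) * indicator {\<omega>\<in>space M. True \<and> J (Suc n) \<omega> = i} \<omega>) \<partial>M)"
      by (intro nn_integral_cong sum_ind_nn) auto
    also have "\<dots> = (\<Sum>i\<in>{1..N}. ennreal (\<alpha> i) * ennreal (q n i))"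
      by (subst nn_integral_sum) (auto simp: nn_integral_cmult_indicator emeasure_eq_measure q_def)
    also have "\<dots> = ennreal (\<Sum>i\<in>{1..N}. \<alpha> i * q n i)"
      by (subst sum_ennreal[symmetric]) (auto simp: alpha_nonneg ennreal_mult q_def intro!: sum.cong mult_nonneg_nonneg)
    finally show ?thesis .
  qed
  also have "(\<integral>\<^sup>+\<omega>. (if X n \<omega> = 0 then ennreal EBv else 0) \<partial>M) = ennreal (EBv * (\<Sum>i\<in>{1..N}. u n i))"
  proof -
    have "(\<integral>\<^sup>+\<omega>. (if X n \<omega> = 0 then ennreal EBv else 0) \<partial>M) =
      (\<integral>\<^sup>+\<omega>. (\<Sum>i\<in>{1..N}. ennreal EBv * indicator {\<omega>\<in>space M. X n \<omega> = 0 \<and> J (Suc n) \<omega> = i} \<omega>) \<partial>M)"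
    proof (intro nn_integral_cong)
      fix \<omega> assume \<omega>: "\<omega> \<in> space M"
      show "(if X n \<omega> = 0 then ennreal EBv else 0) = (\<Sum>i\<in>{1..N}. ennreal EBv * indicator {\<omega>\<in>space M. X n \<omega> = 0 \<and> J (Suc n) \<omega> = i} \<omega>)"
      proof (cases "X n \<omega> = 0")
        case True
        show ?thesis using sum_ind_nn[OF \<omega>, of "\<lambda>\<omega>. X n \<omega> = 0" "\<lambda>_. EBv" n] True by simp
      next
        case False
        then show ?thesis by (simp add: indicator_def)
      qed
    qed
    also have "\<dots> = (\<Sum>i\<in>{1..N}. ennreal EBv * ennreal (u n i))"
      by (subst nn_integral_sum) (auto simp: nn_integral_cmult_indicator emeasure_eq_measure u_def)
    also have "\<dots> = ennreal (EBv * (\<Sum>i\<in>{1..N}. u n i))"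
      by (simp add: sum_ennreal ennreal_mult[symmetric] EBn u_def sum_distrib_left)
    finally show ?thesis .
  qed
  finally show ?thesis by (simp add: EBv_def)
qed

end

lemma ces:
  fixes c :: "nat \<Rightarrow> real"
  assumes lim: "c \<longlonglongrightarrow> l" and bnd: "\<And>n. C + (\<Sum>m<n. c m) \<ge> 0"
  shows "l \<ge> 0"
proof (rule ccontr)
  assume "\<not> l \<ge> 0"
  then have l: "l < 0" by simp
  have "eventually (\<lambda>m. c m < l / 2) sequentially"
    using lim l by (intro order_tendstoD(2)) auto
  then obtain N0 where N0: "\<And>m. m \<ge> N0 \<Longrightarrow> c m < l / 2" by (auto simp: eventually_sequentially)
  define S0 where "S0 = C + (\<Sum>m<N0. c m)"
  obtain K :: nat where K: "real K > S0 / (- l / 2)" using reals_Archimedean2 by blast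
  have "(\<Sum>m<N0 + K. c m) = (\<Sum>m<N0. c m) + (\<Sum>m\<in>{N0..<N0+K}. c m)"
    by (simp add: sum.atLeastLessThan_concat[symmetric] lessThan_atLeast0 add.commute)
  moreover have "(\<Sum>m\<in>{N0..<N0+K}. c m) \<le> (\<Sum>m\<in>{N0..<N0+K}. l / 2)"
    by (rule sum_mono) (use N0 in \<open>auto intro: less_imp_le\<close>)
  moreover have "(\<Sum>m\<in>{N0..<N0+K}. l / 2) = real K * (l / 2)" by simp
  moreover have "real K * (- l / 2) > S0"
    using K l by (simp add: field_simps)
  ultimately have "C + (\<Sum>m<N0 + K. c m) < 0" unfolding S0_def by (simp add: algebra_simps)
  with bnd[of "N0 + K"] show False by simp
qed

context qsys begin

definition EB :: real where "EB = (\<Sum>b. real b * pB b)"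

lemma drift_ineq:
  assumes EBs: "summable (\<lambda>k. real k * pB k)"
  shows "(\<Sum>i\<in>{1..N}. \<pi> i * \<alpha> i) + EB * (\<Sum>i\<in>{1..N}. Fr i 0) \<ge> 1"
proof -
  interpret prob_space M by (rule prob)
  define e where "e n = (\<integral>\<^sup>+\<omega>. of_nat (X n \<omega>) \<partial>M)" for n
  define Sa where "Sa n = (\<Sum>i\<in>{1..N}. \<alpha> i * q n i)" for n
  define Su where "Su n = EB * (\<Sum>i\<in>{1..N}. u n i)" for n
  have EBn: "EB \<ge> 0" unfolding EB_def by (intro suminf_nonneg EBs) (simp add: pB_nonneg)
  have San: "Sa n \<ge> 0" for n unfolding Sa_def q_def by (intro sum_nonneg mult_nonneg_nonneg alpha_nonneg) auto
  have Sun: "Su n \<ge> 0" for n unfolding Su_def u_def by (intro mult_nonneg_nonneg EBn sum_nonneg) auto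
  have step: "e (Suc n) + 1 = e n + ennreal (Sa n) + ennreal (Su n)" for n
    unfolding e_def Sa_def Su_def EB_def by (rule drift_step[OF EBs])
  define E where "E n = enn2real (e n)" for n
  have En: "E n \<ge> 0" for n by (simp add: E_def)
  have fin: "e n = ennreal (E n)" for n
  proof (induction n)
    case 0
    have "e 0 = of_nat X0" by (simp add: e_def emeasure_space_1)
    then show ?case by (simp add: E_def ennreal_of_nat_eq_real_of_nat)
  next
    case (Suc n)
    have "e (Suc n) + 1 = ennreal (E n + Sa n + Su n)"
      using step[of n] Suc San[of n] Sun[of n] En[of n] by simp
    moreover have "e (Suc n) \<le> e (Suc n) + 1" by (rule add_increasing2) simp_all
    ultimately have "e (Suc n) < top" by (metis ennreal_less_top order_le_less_trans)
    then show ?case by (simp add: E_def less_top)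
  qed
  have Estep: "E (Suc n) + 1 = E n + Sa n + Su n" for n
  proof -
    have "ennreal (E (Suc n) + 1) = ennreal (E n + Sa n + Su n)"
      using step[of n] San[of n] Sun[of n] En[of n] En[of "Suc n"]
      by (simp add: fin)
    then show ?thesis using San[of n] Sun[of n] En[of n] En[of "Suc n"] by (subst (asm) ennreal_inj) auto
  qed
  have Esum: "E n = real X0 + (\<Sum>m<n. Sa m + Su m - 1)" for n
  proof (induction n)
    case 0
    have "e 0 = of_nat X0" by (simp add: e_def emeasure_space_1)
    then have "ennreal (E 0) = ennreal (real X0)" using fin[of 0] by (simp add: ennreal_of_nat_eq_real_of_nat)
    then show ?case using En[of 0] by (subst (asm) ennreal_inj) auto
  next
    case (Suc n)
    then show ?case using Estep[of n] by simp
  qed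
  have lim: "(\<lambda>m. Sa m + Su m - 1) \<longlonglongrightarrow> (\<Sum>i\<in>{1..N}. \<alpha> i * \<pi> i) + EB * (\<Sum>i\<in>{1..N}. Fr i 0) - 1"
  proof -
    have "(\<lambda>m. Sa m) \<longlonglongrightarrow> (\<Sum>i\<in>{1..N}. \<alpha> i * Fr i 1)"
      unfolding Sa_def gr_1[symmetric] by (intro tendsto_sum tendsto_mult tendsto_const gr_lim(1)) auto
    moreover have "(\<lambda>m. Su m) \<longlonglongrightarrow> EB * (\<Sum>i\<in>{1..N}. Fr i 0)"
      unfolding Su_def gr_0[symmetric] by (intro tendsto_sum tendsto_mult tendsto_const gr_lim(1)) auto
    moreover have "(\<Sum>i\<in>{1..N}. \<alpha> i * Fr i 1) = (\<Sum>i\<in>{1..N}. \<alpha> i * \<pi> i)"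
      by (intro sum.cong refl) (simp add: Fr1_pi)
    ultimately show ?thesis by (intro tendsto_diff tendsto_add tendsto_const) auto
  qed
  have "(\<Sum>i\<in>{1..N}. \<alpha> i * \<pi> i) + EB * (\<Sum>i\<in>{1..N}. Fr i 0) - 1 \<ge> 0"
    by (rule ces[OF lim, of "real X0"]) (simp add: Esum[symmetric] En)
  then show ?thesis by (simp add: mult.commute)
qed

end

lemma geo_bound: "0 \<le> (t::real) \<Longrightarrow> t \<le> 1 \<Longrightarrow> 0 \<le> (\<Sum>l<k. t ^ l) \<and> (\<Sum>l<k. t ^ l) \<le> real k"
proof -
  assume t: "0 \<le> t" "t \<le> 1"
  have "(\<Sum>l<k. t ^ l) \<le> (\<Sum>l<k. 1)" by (rule sum_mono) (use t in \<open>simp add: power_le_one\<close>)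
  then show ?thesis using t by (auto intro: sum_nonneg)
qed

lemma D_summable:
  fixes c :: "nat \<Rightarrow> real"
  assumes c: "\<And>k. c k \<ge> 0" and s: "summable (\<lambda>k. real k * c k)" and t: "0 \<le> t" "t \<le> 1"
  shows "summable (\<lambda>k. c k * (\<Sum>l<k. t ^ l))"
proof (rule summable_comparison_test[OF _ s])
  show "\<exists>N. \<forall>n\<ge>N. norm (c n * (\<Sum>l<n. t ^ l)) \<le> real n * c n"
  proof (intro exI allI impI)
    fix n :: nat
    have g: "0 \<le> (\<Sum>l<n. t ^ l)" "(\<Sum>l<n. t ^ l) \<le> real n" using geo_bound[OF t, of n] by auto
    have "norm (c n * (\<Sum>l<n. t ^ l)) = c n * (\<Sum>l<n. t ^ l)" using g c[of n] by simp
    also have "\<dots> \<le> c n * real n" by (rule mult_left_mono[OF g(2) c])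
    finally show "norm (c n * (\<Sum>l<n. t ^ l)) \<le> real n * c n" by (simp add: mult.commute)
  qed
qed

lemma one_minus_split:
  fixes c :: "nat \<Rightarrow> real"
  assumes c: "\<And>k. c k \<ge> 0" and s0: "summable c" and s: "summable (\<lambda>k. real k * c k)" and t: "0 \<le> t" "t \<le> 1"
  shows "(\<Sum>k. c k * t ^ k) = (\<Sum>k. c k) - (1 - t) * (\<Sum>k. c k * (\<Sum>l<k. t ^ l))"
proof -
  have e: "c k * t ^ k = c k - (1 - t) * (c k * (\<Sum>l<k. t ^ l))" for k
  proof -
    have "c k * t ^ k = c k - c k * (1 - t ^ k)" by (simp add: algebra_simps)
    also have "\<dots> = c k - (1 - t) * (c k * (\<Sum>l<k. t ^ l))"
      unfolding one_diff_power_eq by (simp add: mult_ac)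
    finally show ?thesis .
  qed
  have sD: "summable (\<lambda>k. (1 - t) * (c k * (\<Sum>l<k. t ^ l)))"
    by (rule summable_mult[OF D_summable[OF c s t]])
  have "(\<Sum>k. c k * t ^ k) = (\<Sum>k. c k - (1 - t) * (c k * (\<Sum>l<k. t ^ l)))" by (simp only: e)
  also have "\<dots> = (\<Sum>k. c k) - (\<Sum>k. (1 - t) * (c k * (\<Sum>l<k. t ^ l)))"
    by (rule suminf_diff[OF s0 sD, symmetric])
  also have "(\<Sum>k. (1 - t) * (c k * (\<Sum>l<k. t ^ l))) = (1 - t) * (\<Sum>k. c k * (\<Sum>l<k. t ^ l))"
    by (rule suminf_mult[OF D_summable[OF c s t]])
  finally show ?thesis .
qed

lemma D_lim:
  fixes c :: "nat \<Rightarrow> real" and tm :: "nat \<Rightarrow> real"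
  assumes c: "\<And>k. c k \<ge> 0" and s: "summable (\<lambda>k. real k * c k)"
    and tm: "tm \<longlonglongrightarrow> 1" "\<And>m. 0 \<le> tm m" "\<And>m. tm m \<le> 1"
  shows "(\<lambda>m. \<Sum>k. c k * (\<Sum>l<k. tm m ^ l)) \<longlonglongrightarrow> (\<Sum>k. real k * c k)"
proof -
  have lim: "(\<lambda>m. c k * (\<Sum>l<k. tm m ^ l)) \<longlonglongrightarrow> real k * c k" for k
  proof -
    have "(\<lambda>m. c k * (\<Sum>l<k. tm m ^ l)) \<longlonglongrightarrow> c k * (\<Sum>l<k. 1 ^ l)"
      by (intro tendsto_intros tm(1))
    then show ?thesis by (simp add: mult.commute)
  qed
  have bnd: "eventually (\<lambda>(k, m). norm (c k * (\<Sum>l<k. tm m ^ l)) \<le> real k * c k) (at_top \<times>\<^sub>F sequentially)"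
  proof (rule always_eventually, clarify)
    fix k m
    have g: "0 \<le> (\<Sum>l<k. tm m ^ l)" "(\<Sum>l<k. tm m ^ l) \<le> real k" using geo_bound[OF tm(2) tm(3), of m k] by auto
    have "norm (c k * (\<Sum>l<k. tm m ^ l)) = c k * (\<Sum>l<k. tm m ^ l)" using g c[of k] by simp
    also have "\<dots> \<le> c k * real k" by (rule mult_left_mono[OF g(2) c])
    finally show "norm (c k * (\<Sum>l<k. tm m ^ l)) \<le> real k * c k" by (simp add: mult.commute)
  qed
  show ?thesis using tannerys_theorem[OF lim bnd s] by simp
qed

lemma geo_lim: "(\<lambda>m. 1 - 1 / (real m + 2)) \<longlonglongrightarrow> (1::real)"
proof -
  have "(\<lambda>m. 1 / (real m + 2)) \<longlonglongrightarrow> (0::real)"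
    by real_asymp
  then have "(\<lambda>m. 1 - 1 / (real m + 2)) \<longlonglongrightarrow> (1::real) - 0" by (intro tendsto_diff tendsto_const)
  then show ?thesis by simp
qed


context qsys begin

definition tm :: "nat \<Rightarrow> real" where "tm m = 1 - 1 / (real m + 2)"
definition Ar where "Ar i j t = (\<Sum>k. a i j k * t ^ k)"
definition Dr where "Dr i j t = (\<Sum>k. a i j k * (\<Sum>l<k. t ^ l))"
definition Br where "Br t = (\<Sum>b. pB b * t ^ b)"
definition DBr where "DBr t = (\<Sum>b. pB b * (\<Sum>l<b. t ^ l))"

lemma tm_ge: "0 \<le> tm m" and tm_le: "tm m \<le> 1" and tm_lt: "tm m < 1"
  by (auto simp: tm_def field_simps)

lemma tm_lim: "tm \<longlonglongrightarrow> 1"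
  using geo_lim by (simp add: tm_def[abs_def])

lemma tm_inc: "incseq tm"
  unfolding incseq_def tm_def by (auto intro!: divide_left_mono simp: field_simps)

lemma gf_real_sum:
  assumes c: "\<And>k. c k \<ge> 0" and s: "summable c" and t: "0 \<le> t" "t \<le> 1"
  shows "gf c (complex_of_real t) = complex_of_real (\<Sum>k. c k * t ^ k)"
proof -
  have st: "summable (\<lambda>k. c k * t ^ k)"
    by (rule summable_comparison_test[OF _ s]) (use c t in \<open>auto intro!: exI[of _ 0] simp: abs_mult mult_left_le power_le_one\<close>)
  show ?thesis unfolding gf_def by (simp add: suminf_of_real[OF st])
qed

lemma Ar_split: "i \<in> {1..N} \<Longrightarrow> j \<in> {1..N} \<Longrightarrow> 0 \<le> t \<Longrightarrow> t \<le> 1 \<Longrightarrow>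
    Ar i j t = (\<Sum>k. a i j k) - (1 - t) * Dr i j t"
  unfolding Ar_def Dr_def by (rule one_minus_split) (auto simp: a_nonneg a_summ alpha_fin)

lemma Br_split: "summable (\<lambda>k. real k * pB k) \<Longrightarrow> 0 \<le> t \<Longrightarrow> t \<le> 1 \<Longrightarrow> Br t = 1 - (1 - t) * DBr t"
  unfolding Br_def DBr_def using one_minus_split[of pB t] by (simp add: pB_nonneg pB_summable pB_suminf)

lemma Dr_lim: "i \<in> {1..N} \<Longrightarrow> j \<in> {1..N} \<Longrightarrow> (\<lambda>m. Dr i j (tm m)) \<longlonglongrightarrow> (\<Sum>k. real k * a i j k)"
  unfolding Dr_def by (rule D_lim) (auto simp: a_nonneg alpha_fin tm_lim tm_ge tm_le)

lemma DBr_lim: "summable (\<lambda>k. real k * pB k) \<Longrightarrow> (\<lambda>m. DBr (tm m)) \<longlonglongrightarrow> EB"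
  unfolding DBr_def EB_def by (rule D_lim) (auto simp: pB_nonneg tm_lim tm_ge tm_le)

lemma one_minus_tm: "(\<lambda>m. 1 - tm m) \<longlonglongrightarrow> 0"
  using tendsto_diff[OF tendsto_const tm_lim, of 1] by simp

lemma Ar_lim: "i \<in> {1..N} \<Longrightarrow> j \<in> {1..N} \<Longrightarrow> (\<lambda>m. Ar i j (tm m)) \<longlonglongrightarrow> (\<Sum>k. a i j k)"
proof -
  assume ij: "i \<in> {1..N}" "j \<in> {1..N}"
  have "(\<lambda>m. (\<Sum>k. a i j k) - (1 - tm m) * Dr i j (tm m)) \<longlonglongrightarrow> (\<Sum>k. a i j k) - 0 * (\<Sum>k. real k * a i j k)"
    by (intro tendsto_intros one_minus_tm Dr_lim ij)
  then show ?thesis using Ar_split[OF ij tm_ge tm_le] by simp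
qed

lemma Br_lim: "summable (\<lambda>k. real k * pB k) \<Longrightarrow> (\<lambda>m. Br (tm m)) \<longlonglongrightarrow> 1"
proof -
  assume s: "summable (\<lambda>k. real k * pB k)"
  have "(\<lambda>m. 1 - (1 - tm m) * DBr (tm m)) \<longlonglongrightarrow> 1 - 0 * EB"
    by (intro tendsto_intros one_minus_tm DBr_lim s)
  then show ?thesis using Br_split[OF s tm_ge tm_le] by simp
qed

lemma real_eq:
  assumes j: "j \<in> {1..N}" and t: "0 \<le> t" "t \<le> 1"
  shows "t * Fr j t = (\<Sum>i\<in>{1..N}. Ar i j t * (Fr i t - Fr i 0 + Br t * Fr i 0))"
proof -
  have f0: "f i 0 = complex_of_real (Fr i 0)" if "i \<in> {1..N}" for i
    using gr_lim(2)[OF that, of 0] by simp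
  have ft: "f i (complex_of_real t) = complex_of_real (Fr i t)" if "i \<in> {1..N}" for i
    using gr_lim(2)[OF that] t by simp
  have ga: "gf (a i j) (complex_of_real t) = complex_of_real (Ar i j t)" if "i \<in> {1..N}" for i
    unfolding Ar_def by (rule gf_real_sum) (use a_nonneg a_summ[OF that j] t in auto)
  have gb: "gf pB (complex_of_real t) = complex_of_real (Br t)"
    unfolding Br_def by (rule gf_real_sum) (use pB_nonneg pB_summable t in auto)
  have "complex_of_real t * f j (complex_of_real t) = (\<Sum>i\<in>{1..N}. gf (a i j) (complex_of_real t) *
      (f i (complex_of_real t) - f i 0 + gf pB (complex_of_real t) * f i 0))"
    by (rule fixed_eq[OF _ j]) (use t in simp)
  also have "\<dots> = (\<Sum>i\<in>{1..N}. complex_of_real (Ar i j t * (Fr i t - Fr i 0 + Br t * Fr i 0)))"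
    by (intro sum.cong refl) (simp add: f0 ft ga gb)
  finally have "complex_of_real (t * Fr j t) = complex_of_real (\<Sum>i\<in>{1..N}. Ar i j t * (Fr i t - Fr i 0 + Br t * Fr i 0))"
    using ft[OF j] by simp
  then show ?thesis by (simp only: of_real_eq_iff)
qed

lemma gr_mono: "0 \<le> s \<Longrightarrow> s \<le> t \<Longrightarrow> t \<le> 1 \<Longrightarrow> gr n i s \<le> gr n i t"
proof -
  assume st: "0 \<le> s" "s \<le> t" "t \<le> 1"
  interpret prob_space M by (rule prob)
  have int: "integrable M (\<lambda>\<omega>. r ^ X n \<omega> * indicator {\<omega>'. J (Suc n) \<omega>' = i} \<omega>)" if "0 \<le> r" "r \<le> 1" for r :: real
  proof (rule integrable_const_bound[where B=1])
    show "AE x in M. norm (r ^ X n x * indicator {\<omega>'. J (Suc n) \<omega>' = i} x) \<le> 1"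
      using that by (auto simp: indicator_def power_le_one)
    have "(\<lambda>\<omega>. if J (Suc n) \<omega> = i then r ^ X n \<omega> else 0) \<in> borel_measurable M" by measurable
    moreover have "(\<lambda>\<omega>. r ^ X n \<omega> * indicator {\<omega>'. J (Suc n) \<omega>' = i} \<omega>) = (\<lambda>\<omega>. if J (Suc n) \<omega> = i then r ^ X n \<omega> else 0)"
      by (auto simp: indicator_def)
    ultimately show "(\<lambda>\<omega>. r ^ X n \<omega> * indicator {\<omega>'. J (Suc n) \<omega>' = i} \<omega>) \<in> borel_measurable M" by simp
  qed
  show ?thesis unfolding gr_def
    by (rule integral_mono[OF int int]) (use st in \<open>auto simp: indicator_def power_mono\<close>)
qed

lemma Fr_mono: "i \<in> {1..N} \<Longrightarrow> 0 \<le> s \<Longrightarrow> s \<le> t \<Longrightarrow> t \<le> 1 \<Longrightarrow> Fr i s \<le> Fr i t"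
  by (rule LIMSEQ_le[OF gr_lim(1) gr_lim(1)]) (auto intro: gr_mono)

end

context qsys begin

definition L :: "nat \<Rightarrow> real" where "L i = (SUP m. Fr i (tm m))"

lemma Fr_le_pi: "i \<in> {1..N} \<Longrightarrow> t \<in> {0..1} \<Longrightarrow> Fr i t \<le> \<pi> i"
  using Fr_mono[of i t 1] Fr1_pi by auto

lemma L_lim: assumes i: "i \<in> {1..N}" shows "(\<lambda>m. Fr i (tm m)) \<longlonglongrightarrow> L i"
proof -
  have "bdd_above (range (\<lambda>m. Fr i (tm m)))"
    using Fr_le_pi[OF i] tm_ge tm_le by (intro bdd_aboveI[of _ "\<pi> i"]) auto
  moreover have "incseq (\<lambda>m. Fr i (tm m))"
    using tm_inc tm_ge tm_le by (auto simp: incseq_def intro!: Fr_mono[OF i])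
  ultimately show ?thesis unfolding L_def by (rule LIMSEQ_incseq_SUP)
qed

lemma L_le: "i \<in> {1..N} \<Longrightarrow> L i \<le> \<pi> i"
  using Fr_le_pi tm_ge tm_le by (intro LIMSEQ_le_const2[OF L_lim]) auto

lemma L_stat: assumes j: "j \<in> {1..N}" and EBs: "summable (\<lambda>k. real k * pB k)" shows "(\<Sum>i\<in>{1..N}. L i * (\<Sum>k. a i j k)) = L j"
proof -
  have l1: "(\<lambda>m. tm m * Fr j (tm m)) \<longlonglongrightarrow> 1 * L j"
    by (intro tendsto_mult tm_lim L_lim j)
  have l2: "(\<lambda>m. \<Sum>i\<in>{1..N}. Ar i j (tm m) * (Fr i (tm m) - Fr i 0 + Br (tm m) * Fr i 0))
     \<longlonglongrightarrow> (\<Sum>i\<in>{1..N}. (\<Sum>k. a i j k) * (L i - Fr i 0 + 1 * Fr i 0))"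
    using j by (intro tendsto_sum tendsto_mult tendsto_add tendsto_diff tendsto_const Ar_lim L_lim Br_lim EBs) auto
  have eq: "(\<lambda>m. tm m * Fr j (tm m)) = (\<lambda>m. \<Sum>i\<in>{1..N}. Ar i j (tm m) * (Fr i (tm m) - Fr i 0 + Br (tm m) * Fr i 0))"
    using real_eq[OF j tm_ge tm_le] by presburger
  have "1 * L j = (\<Sum>i\<in>{1..N}. (\<Sum>k. a i j k) * (L i - Fr i 0 + 1 * Fr i 0))"
    using l1 l2 unfolding eq by (rule LIMSEQ_unique)
  then show ?thesis by (simp add: mult.commute)
qed

end

context qsys begin

definition Dsum where "Dsum i t = (\<Sum>j\<in>{1..N}. Dr i j t)"

lemma abel_id:
  assumes EBs: "summable (\<lambda>k. real k * pB k)" and t: "0 \<le> t" "t < 1"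
  shows "(\<Sum>i\<in>{1..N}. (1 - Dsum i t) * Fr i t) = DBr t * (\<Sum>i\<in>{1..N}. (1 - (1 - t) * Dsum i t) * Fr i 0)"
proof -
  define W where "W i = Fr i t - Fr i 0 + Br t * Fr i 0" for i
  have A: "(\<Sum>j\<in>{1..N}. Ar i j t) = 1 - (1 - t) * Dsum i t" if i: "i \<in> {1..N}" for i
  proof -
    have "(\<Sum>j\<in>{1..N}. Ar i j t) = (\<Sum>j\<in>{1..N}. (\<Sum>k. a i j k) - (1 - t) * Dr i j t)"
      by (intro sum.cong refl Ar_split i) (use t in auto)
    also have "\<dots> = 1 - (1 - t) * Dsum i t"
      using Psum[OF i] by (simp add: sum_subtractf Dsum_def sum_distrib_left)
    finally show ?thesis .
  qed
  have Wd: "W i = Fr i t - (1 - t) * DBr t * Fr i 0" for i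
    unfolding W_def Br_split[OF EBs t(1) less_imp_le[OF t(2)]] by (simp add: algebra_simps)
  have "t * (\<Sum>j\<in>{1..N}. Fr j t) = (\<Sum>j\<in>{1..N}. \<Sum>i\<in>{1..N}. Ar i j t * W i)"
    unfolding sum_distrib_left W_def by (intro sum.cong refl real_eq) (use t in auto)
  also have "\<dots> = (\<Sum>i\<in>{1..N}. (\<Sum>j\<in>{1..N}. Ar i j t) * W i)"
    by (subst sum.swap) (simp add: sum_distrib_right)
  also have "\<dots> = (\<Sum>i\<in>{1..N}. (1 - (1 - t) * Dsum i t) * (Fr i t - (1 - t) * DBr t * Fr i 0))"
  proof (intro sum.cong refl)
    fix i assume i: "i \<in> {1..N}"
    show "(\<Sum>j\<in>{1..N}. Ar i j t) * W i = (1 - (1 - t) * Dsum i t) * (Fr i t - (1 - t) * DBr t * Fr i 0)"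
      by (simp only: A[OF i] Wd)
  qed
  finally have E: "t * (\<Sum>j\<in>{1..N}. Fr j t) = (\<Sum>i\<in>{1..N}. (1 - (1 - t) * Dsum i t) * (Fr i t - (1 - t) * DBr t * Fr i 0))" .
  have "(\<Sum>i\<in>{1..N}. (1 - t) * ((Dsum i t - 1) * Fr i t + DBr t * ((1 - (1 - t) * Dsum i t) * Fr i 0)))
      = (\<Sum>i\<in>{1..N}. t * Fr i t - (1 - (1 - t) * Dsum i t) * (Fr i t - (1 - t) * DBr t * Fr i 0))"
    by (intro sum.cong refl) (simp add: algebra_simps)
  also have "\<dots> = 0" using E by (simp add: sum_subtractf sum_distrib_left)
  finally have "(1 - t) * (\<Sum>i\<in>{1..N}. (Dsum i t - 1) * Fr i t + DBr t * ((1 - (1 - t) * Dsum i t) * Fr i 0)) = 0"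
    by (simp add: sum_distrib_left)
  then have "(\<Sum>i\<in>{1..N}. (Dsum i t - 1) * Fr i t + DBr t * ((1 - (1 - t) * Dsum i t) * Fr i 0)) = 0"
    using t by simp
  then have "(\<Sum>i\<in>{1..N}. (Dsum i t - 1) * Fr i t) + DBr t * (\<Sum>i\<in>{1..N}. (1 - (1 - t) * Dsum i t) * Fr i 0) = 0"
    by (simp add: sum.distrib sum_distrib_left)
  moreover have "(\<Sum>i\<in>{1..N}. (Dsum i t - 1) * Fr i t) = - (\<Sum>i\<in>{1..N}. (1 - Dsum i t) * Fr i t)"
    by (simp add: sum_negf[symmetric] algebra_simps)
  ultimately show ?thesis by linarith
qed

lemma Dsum_lim: "i \<in> {1..N} \<Longrightarrow> (\<lambda>m. Dsum i (tm m)) \<longlonglongrightarrow> \<alpha> i"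
  unfolding Dsum_def \<alpha>_def by (intro tendsto_sum Dr_lim) auto

lemma abel:
  assumes EBs: "summable (\<lambda>k. real k * pB k)"
  shows "(\<Sum>i\<in>{1..N}. (1 - \<alpha> i) * L i) = EB * (\<Sum>i\<in>{1..N}. Fr i 0)"
proof -
  have l1: "(\<lambda>m. \<Sum>i\<in>{1..N}. (1 - Dsum i (tm m)) * Fr i (tm m)) \<longlonglongrightarrow> (\<Sum>i\<in>{1..N}. (1 - \<alpha> i) * L i)"
    by (intro tendsto_sum tendsto_mult tendsto_diff tendsto_const Dsum_lim L_lim) auto
  have l2: "(\<lambda>m. DBr (tm m) * (\<Sum>i\<in>{1..N}. (1 - (1 - tm m) * Dsum i (tm m)) * Fr i 0))
      \<longlonglongrightarrow> EB * (\<Sum>i\<in>{1..N}. (1 - 0 * \<alpha> i) * Fr i 0)"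
    by (intro tendsto_mult tendsto_sum tendsto_diff tendsto_const DBr_lim EBs one_minus_tm Dsum_lim) auto
  have eq: "(\<lambda>m. \<Sum>i\<in>{1..N}. (1 - Dsum i (tm m)) * Fr i (tm m)) =
      (\<lambda>m. DBr (tm m) * (\<Sum>i\<in>{1..N}. (1 - (1 - tm m) * Dsum i (tm m)) * Fr i 0))"
    using abel_id[OF EBs tm_ge tm_lt] by presburger
  have "(\<Sum>i\<in>{1..N}. (1 - \<alpha> i) * L i) = EB * (\<Sum>i\<in>{1..N}. (1 - 0 * \<alpha> i) * Fr i 0)"
    using l1 l2 unfolding eq by (rule LIMSEQ_unique)
  then show ?thesis by simp
qed

end

context qsys begin

lemma part2:
  assumes EBs: "summable (\<lambda>k. real k * pB k)"
  shows "(\<Sum>i\<in>{1..N}. f i 0) = complex_of_real ((1 - (\<Sum>i\<in>{1..N}. \<Sum>j\<in>{1..N}. \<pi> i * (\<Sum>k. real k * a i j k))) / (\<Sum>k. real k * pB k))"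
proof -
  define r where "r = (\<Sum>i\<in>{1..N}. \<pi> i * \<alpha> i)"
  have rr: "(\<Sum>i\<in>{1..N}. \<Sum>j\<in>{1..N}. \<pi> i * (\<Sum>k. real k * a i j k)) = r"
    unfolding r_def \<alpha>_def by (simp add: sum_distrib_left)
  have r1: "r < 1" using rho_lt rr by simp
  define c where "c = (\<Sum>i\<in>{1..N}. L i)"
  define p0 where "p0 = (\<Sum>i\<in>{1..N}. Fr i 0)"
  have pis: "(\<Sum>i\<in>{1..N}. \<pi> i) = 1" using pi_stat by (simp add: stationary_dist_def)
  have Lc: "L i = c * \<pi> i" if "i \<in> {1..N}" for i
    unfolding c_def by (rule stat_unique[OF P_stoch P_irred pi_stat _ that]) (rule L_stat[OF _ EBs])
  have c1: "c \<le> 1"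
  proof -
    have "c \<le> (\<Sum>i\<in>{1..N}. \<pi> i)" unfolding c_def by (rule sum_mono) (rule L_le)
    then show ?thesis using pis by simp
  qed
  have "EB * p0 = (\<Sum>i\<in>{1..N}. (1 - \<alpha> i) * L i)" unfolding p0_def by (rule abel[OF EBs, symmetric])
  also have "\<dots> = (\<Sum>i\<in>{1..N}. c * (\<pi> i - \<pi> i * \<alpha> i))"
    by (intro sum.cong refl) (simp add: Lc algebra_simps)
  also have "\<dots> = c * (1 - r)"
    using pis by (simp add: sum_distrib_left[symmetric] sum_subtractf r_def)
  finally have E1: "EB * p0 = c * (1 - r)" .
  have E2: "r + EB * p0 \<ge> 1" using drift_ineq[OF EBs] unfolding r_def p0_def .
  have "c * (1 - r) \<le> 1 - r" using mult_right_mono[OF c1, of "1 - r"] r1 by simp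
  then have E3: "EB * p0 = 1 - r" using E1 E2 by linarith
  have EB1: "EB \<ge> 1"
  proof -
    have "(\<Sum>b. pB b) \<le> (\<Sum>b. real b * pB b)"
    proof (rule suminf_le[OF _ pB_summable EBs])
      show "pB n \<le> real n * pB n" for n
        using pB0 pB_nonneg[of n] by (cases n) (auto simp: mult_le_cancel_right1)
    qed
    then show ?thesis by (simp add: EB_def pB_suminf)
  qed
  have p0v: "p0 = (1 - r) / EB" using E3 EB1 by (simp add: field_simps)
  have "(\<Sum>i\<in>{1..N}. f i 0) = (\<Sum>i\<in>{1..N}. complex_of_real (Fr i 0))"
    by (intro sum.cong refl) (use gr_lim(2)[of _ 0] in simp)
  also have "\<dots> = complex_of_real p0" by (simp add: p0_def)
  finally show ?thesis unfolding rr by (simp add: p0v EB_def)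
qed

lemma final:
  "(\<forall>z j. norm z \<le> 1 \<longrightarrow> j \<in> {1..N} \<longrightarrow>
            (z - gf (a j j) z) * f j z - (\<Sum>i\<in>{1..N} - {j}. gf (a i j) z * f i z)
              = (gf pB z - 1) * (\<Sum>i\<in>{1..N}. gf (a i j) z * f i 0))
       \<and> (summable (\<lambda>k. real k * pB k) \<longrightarrow>
            (\<Sum>i\<in>{1..N}. f i 0) = complex_of_real ((1 - (\<Sum>i\<in>{1..N}. \<Sum>j\<in>{1..N}. \<pi> i * (\<Sum>k. real k * a i j k))) / (\<Sum>k. real k * pB k)))"
  using part1 part2 by blast

end

theorem mainTheorem10:
  fixes M :: "'s measure"
    and N :: nat
    and a :: "nat \<Rightarrow> nat \<Rightarrow> nat \<Rightarrow> real"
    and pB :: "nat \<Rightarrow> real"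
    and \<pi> :: "nat \<Rightarrow> real"
    and A J B :: "nat \<Rightarrow> 's \<Rightarrow> nat"
    and X0 :: nat
    and f :: "nat \<Rightarrow> complex \<Rightarrow> complex"
  defines "P \<equiv> (\<lambda>i j. \<Sum>k. a i j k)"
    and "\<rho> \<equiv> (\<Sum>i\<in>{1..N}. \<Sum>j\<in>{1..N}. \<pi> i * (\<Sum>k. real k * a i j k))"
    and "X \<equiv> Xproc X0 A B"
  assumes N2: "N \<ge> 2"
    and a_nonneg: "\<And>i j k. a i j k \<ge> 0"
    and a_summ: "\<And>i j. i \<in> {1..N} \<Longrightarrow> j \<in> {1..N} \<Longrightarrow> summable (a i j)"
    and alpha_fin: "\<And>i j. i \<in> {1..N} \<Longrightarrow> j \<in> {1..N} \<Longrightarrow> summable (\<lambda>k. real k * a i j k)"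
    and P_stoch: "stochastic_mat N P"
    and P_irred: "irreducible_mat N P"
    and pi_stat: "stationary_dist N P \<pi>"
    and pB_nonneg: "\<And>k. pB k \<ge> 0"
    and pB0: "pB 0 = 0"
    and pB_sum: "pB sums 1"
    and prob: "prob_space M"
    and A_rv: "\<And>n. A n \<in> measurable M (count_space UNIV)"
    and J_rv: "\<And>n. J n \<in> measurable M (count_space UNIV)"
    and B_rv: "\<And>n. B n \<in> measurable M (count_space UNIV)"
    and J_range: "\<And>n \<omega>. n \<ge> 1 \<Longrightarrow> \<omega> \<in> space M \<Longrightarrow> J n \<omega> \<in> {1..N}"
    and B_pos: "\<And>n \<omega>. n \<ge> 1 \<Longrightarrow> \<omega> \<in> space M \<Longrightarrow> B n \<omega> \<ge> 1"
    and joint_law: "\<And>n m jj kk bb.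
       measure M {\<omega> \<in> space M. J 1 \<omega> = jj 1 \<and>
            (\<forall>t\<in>{1..n}. A t \<omega> = kk t \<and> J (Suc t) \<omega> = jj (Suc t)) \<and>
            (\<forall>t\<in>{1..m}. B t \<omega> = bb t)}
       = measure M {\<omega> \<in> space M. J 1 \<omega> = jj 1}
         * (\<Prod>t\<in>{1..n}. a (jj t) (jj (Suc t)) (kk t)) * (\<Prod>t\<in>{1..m}. pB (bb t))"
    and rho_lt: "\<rho> < 1"
    and f_lim: "\<And>j z. j \<in> {1..N} \<Longrightarrow> norm z \<le> 1 \<Longrightarrow>
       (\<lambda>n. integral\<^sup>L M (\<lambda>\<omega>. z ^ X n \<omega> * indicator {\<omega>'. J (Suc n) \<omega>' = j} \<omega>))
         \<longlonglongrightarrow> f j z"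
  shows "(\<forall>z j. norm z \<le> 1 \<longrightarrow> j \<in> {1..N} \<longrightarrow>
            (z - gf (a j j) z) * f j z - (\<Sum>i\<in>{1..N} - {j}. gf (a i j) z * f i z)
              = (gf pB z - 1) * (\<Sum>i\<in>{1..N}. gf (a i j) z * f i 0))
       \<and> (summable (\<lambda>k. real k * pB k) \<longrightarrow>
            (\<Sum>i\<in>{1..N}. f i 0) = complex_of_real ((1 - \<rho>) / (\<Sum>k. real k * pB k)))"
proof -
  have Q: "qsys M N a pB \<pi> A J B X0 f"
    using a_nonneg a_summ alpha_fin P_stoch[unfolded P_def] P_irred[unfolded P_def] pi_stat[unfolded P_def]
      pB_nonneg pB0 pB_sum prob A_rv J_rv B_rv J_range B_pos joint_law rho_lt[unfolded \<rho>_def] f_lim[unfolded X_def]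
    by (rule qsys.intro)
  show ?thesis unfolding \<rho>_def by (rule qsys.final[OF Q])
qed

end
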